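(* Let $x:M^n\to\mathbb{R}^{n+1}$ be a locally strongly convex centroaffine hypersurface. Then $\|\hat\nabla K\|^2\ge\frac{3n^2}{n+2}\|\hat\nabla T\|^2$, where, with respect to any local $h$-orthonormal frame $\{e_i\}$, $\|\hat\nabla K\|^2=\sum_{i,j,k,l}(K^k_{ij,l})^2$ and $\|\hat\nabla T\|^2=\sum_{i,j}(T^j_{,i})^2$. Moreover, equality holds if and only if the traceless difference tensor $\tilde K$ is parallel, i.e. $\hat\nabla\tilde K=0$, or equivalently $$K^k_{ij,l}=\tfrac{n}{n+2}\big(T^k_{,l}\delta_{ij}+T^i_{,l}\delta_{jk}+T^j_{,l}\delta_{ik}\big),\quad 1\le i,j,k,l\le n.$$
   Context: A centroaffine hypersurface is an immersion $x:M^n\to\mathbb{R}^{n+1}$ whose position vector is everywhere transversal to the tangent space; with $D$ the flat connection of $\mathbb{R}^{n+1}$, $D_Xx_*(Y)=x_*(\nabla_XY)+h(X,Y)(-\varepsilon x)$, $\varepsilon=\pm1$, defines the induced connection $\nabla$ and centroaffine metric $h$. Locally strongly convex means $h$ definite, and $\varepsilon$ is chosen so that $h$ is positive definite. $\hat\nabla$ is the Levi-Civita connection of $h$, $K_XY=\nabla_XY-\hat\nabla_XY$ the difference tensor, $T$ the Tchebychev vector field defined by $h(T,X)=\frac1n\operatorname{trace}K_X$, and $\tilde K(X,Y)=K(X,Y)-\frac{n}{n+2}[h(X,Y)T+h(X,T)Y+h(Y,T)X]$. In an $h$-orthonormal frame $\{e_i\}$: $K^k_{ij}=h(K_{e_i}e_j,e_k)$,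 $T^i=h(T,e_i)$, $K^k_{ij,l}=h((\hat\nabla_{e_l}K)(e_i,e_j),e_k)$, $T^j_{,i}=h(\hat\nabla_{e_i}T,e_j)$. *)

theory Defs
  imports "HOL-Analysis.Analysis"
begin

(* Local coordinate model: the hypersurface is given by a local parametrization
   x : U \<subseteq> R^n \<rightarrow> R^(n+1) (coordinates u = (u_1..u_n), index type 'n).
   All geometric quantities are computed in the coordinate frame \<partial>_1..\<partial>_n. *)

definition pd :: "(real^'n \<Rightarrow> 'b::real_normed_vector) \<Rightarrow> 'n \<Rightarrow> real^'n \<Rightarrow> 'b" where
  "pd F i u = frechet_derivative F (at u) (axis i 1)"

fun pdl :: "(real^'n \<Rightarrow> 'b::real_normed_vector) \<Rightarrow> 'n list \<Rightarrow> real^'n \<Rightarrow> 'b" where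
  "pdl F [] = F"
| "pdl F (i # is) = pd (pdl F is) i"

definition smooth_on_open :: "(real^'n \<Rightarrow> 'b::real_normed_vector) \<Rightarrow> (real^'n) set \<Rightarrow> bool" where
  "smooth_on_open F U \<longleftrightarrow> open U \<and> (\<forall>is. pdl F is differentiable_on U)"

text \<open>Immersion with position vector transversal to the tangent space:
  x(u), x_1(u), ..., x_n(u) are linearly independent.\<close>
definition centroaffine_at :: "(real^'n \<Rightarrow> real^'m) \<Rightarrow> real^'n \<Rightarrow> bool" where
  "centroaffine_at x u \<longleftrightarrow>
     (\<forall>c a. c *\<^sub>R x u + (\<Sum>i\<in>UNIV. a i *\<^sub>R pd x i u) = 0 \<longrightarrow> c = 0 \<and> (\<forall>i. a i = 0))"

text \<open>Gauss formula D_{\<partial>i} x_*(\<partial>j) = x_*(\<nabla>_{\<partial>i}\<partial>j) + h(\<partial>i,\<partial>j)(-\<epsilon> x).\<close>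
definition gauss_coeffs :: "(real^'n \<Rightarrow> real^'m) \<Rightarrow> real \<Rightarrow> real^'n \<Rightarrow> 'n \<Rightarrow> 'n \<Rightarrow> ('n \<Rightarrow> real) \<times> real" where
  "gauss_coeffs x \<epsilon> u i j = (THE (g, c). pd (pd x j) i u =
        (\<Sum>k\<in>UNIV. g k *\<^sub>R pd x k u) + c *\<^sub>R (- \<epsilon> *\<^sub>R x u))"

text \<open>Induced connection \<nabla>_{\<partial>i}\<partial>j = \<Sum>k Gam k i j \<partial>k.\<close>
definition Gam :: "(real^'n \<Rightarrow> real^'m) \<Rightarrow> real \<Rightarrow> real^'n \<Rightarrow> 'n \<Rightarrow> 'n \<Rightarrow> 'n \<Rightarrow> real" where
  "Gam x \<epsilon> u k i j = fst (gauss_coeffs x \<epsilon> u i j) k"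

definition hmet :: "(real^'n \<Rightarrow> real^'m) \<Rightarrow> real \<Rightarrow> real^'n \<Rightarrow> 'n \<Rightarrow> 'n \<Rightarrow> real" where
  "hmet x \<epsilon> u i j = snd (gauss_coeffs x \<epsilon> u i j)"

definition hpos :: "(real^'n \<Rightarrow> real^'m) \<Rightarrow> real \<Rightarrow> real^'n \<Rightarrow> bool" where
  "hpos x \<epsilon> u \<longleftrightarrow> (\<forall>v::real^'n. v \<noteq> 0 \<longrightarrow> (\<Sum>i\<in>UNIV. \<Sum>j\<in>UNIV. hmet x \<epsilon> u i j * v$i * v$j) > 0)"

definition hinv :: "(real^'n \<Rightarrow> real^'m) \<Rightarrow> real \<Rightarrow> real^'n \<Rightarrow> 'n \<Rightarrow> 'n \<Rightarrow> real" where
  "hinv x \<epsilon> u i j = matrix_inv ((\<chi> a b. hmet x \<epsilon> u a b) :: real^'n^'n) $ i $ j"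

definition chr :: "(real^'n \<Rightarrow> real^'m) \<Rightarrow> real \<Rightarrow> real^'n \<Rightarrow> 'n \<Rightarrow> 'n \<Rightarrow> 'n \<Rightarrow> real" where
  "chr x \<epsilon> u k i j = (1/2) * (\<Sum>l\<in>UNIV. hinv x \<epsilon> u k l *
      (pd (\<lambda>v. hmet x \<epsilon> v j l) i u + pd (\<lambda>v. hmet x \<epsilon> v i l) j u - pd (\<lambda>v. hmet x \<epsilon> v i j) l u))"

text \<open>Difference tensor K(\<partial>i,\<partial>j) = \<Sum>k Kc k i j \<partial>k.\<close>
definition Kc :: "(real^'n \<Rightarrow> real^'m) \<Rightarrow> real \<Rightarrow> real^'n \<Rightarrow> 'n \<Rightarrow> 'n \<Rightarrow> 'n \<Rightarrow> real" where
  "Kc x \<epsilon> u k i j = Gam x \<epsilon> u k i j - chr x \<epsilon> u k i j"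

text \<open>Tchebychev vector field T = \<Sum>j Tc j \<partial>j, h(T,X) = (1/n) trace K_X.\<close>
definition Tc :: "(real^'n \<Rightarrow> real^'m) \<Rightarrow> real \<Rightarrow> real^'n \<Rightarrow> 'n \<Rightarrow> real" where
  "Tc x \<epsilon> u j = (1 / real CARD('n)) *
      (\<Sum>i\<in>UNIV. hinv x \<epsilon> u j i * (\<Sum>k\<in>UNIV. Kc x \<epsilon> u k i k))"

definition Tlow :: "(real^'n \<Rightarrow> real^'m) \<Rightarrow> real \<Rightarrow> real^'n \<Rightarrow> 'n \<Rightarrow> real" where
  "Tlow x \<epsilon> u i = (\<Sum>m\<in>UNIV. hmet x \<epsilon> u i m * Tc x \<epsilon> u m)"

definition kdelta :: "'a \<Rightarrow> 'a \<Rightarrow> real" where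
  "kdelta a b = (if a = b then 1 else 0)"

definition Ktil :: "(real^'n \<Rightarrow> real^'m) \<Rightarrow> real \<Rightarrow> real^'n \<Rightarrow> 'n \<Rightarrow> 'n \<Rightarrow> 'n \<Rightarrow> real" where
  "Ktil x \<epsilon> u k i j = Kc x \<epsilon> u k i j - (real CARD('n) / (real CARD('n) + 2)) *
      (hmet x \<epsilon> u i j * Tc x \<epsilon> u k + Tlow x \<epsilon> u i * kdelta k j + Tlow x \<epsilon> u j * kdelta k i)"

text \<open>Levi-Civita covariant derivative of a (1,2)-tensor field A (components A v k i j = A^k_ij):
  (\<nabla>^_{\<partial>l} A)^k_ij.\<close>
definition cov12 :: "(real^'n \<Rightarrow> real^'m) \<Rightarrow> real \<Rightarrow> (real^'n \<Rightarrow> 'n \<Rightarrow> 'n \<Rightarrow> 'n \<Rightarrow> real)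
     \<Rightarrow> real^'n \<Rightarrow> 'n \<Rightarrow> 'n \<Rightarrow> 'n \<Rightarrow> 'n \<Rightarrow> real" where
  "cov12 x \<epsilon> A u l k i j = pd (\<lambda>v. A v k i j) l u
      + (\<Sum>m\<in>UNIV. chr x \<epsilon> u k l m * A u m i j)
      - (\<Sum>m\<in>UNIV. chr x \<epsilon> u m l i * A u k m j)
      - (\<Sum>m\<in>UNIV. chr x \<epsilon> u m l j * A u k i m)"

definition covT :: "(real^'n \<Rightarrow> real^'m) \<Rightarrow> real \<Rightarrow> real^'n \<Rightarrow> 'n \<Rightarrow> 'n \<Rightarrow> real" where
  "covT x \<epsilon> u i j = pd (\<lambda>v. Tc x \<epsilon> v j) i u + (\<Sum>m\<in>UNIV. chr x \<epsilon> u j i m * Tc x \<epsilon> u m)"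

definition hform :: "(real^'n \<Rightarrow> real^'m) \<Rightarrow> real \<Rightarrow> real^'n \<Rightarrow> real^'n \<Rightarrow> real^'n \<Rightarrow> real" where
  "hform x \<epsilon> u a b = (\<Sum>i\<in>UNIV. \<Sum>j\<in>UNIV. hmet x \<epsilon> u i j * a$i * b$j)"

definition h_orthonormal_frame :: "(real^'n \<Rightarrow> real^'m) \<Rightarrow> real \<Rightarrow> real^'n \<Rightarrow> ('n \<Rightarrow> real^'n) \<Rightarrow> bool" where
  "h_orthonormal_frame x \<epsilon> u E \<longleftrightarrow> (\<forall>a b. hform x \<epsilon> u (E a) (E b) = kdelta a b)"

text \<open>K^k_{ij,l} = h((\<nabla>^_{e_l} K)(e_i,e_j), e_k).\<close>
definition Kder :: "(real^'n \<Rightarrow> real^'m) \<Rightarrow> real \<Rightarrow> real^'n \<Rightarrow> ('n \<Rightarrow> real^'n)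
     \<Rightarrow> 'n \<Rightarrow> 'n \<Rightarrow> 'n \<Rightarrow> 'n \<Rightarrow> real" where
  "Kder x \<epsilon> u E k i j l = (\<Sum>g\<in>UNIV. \<Sum>a\<in>UNIV. \<Sum>b\<in>UNIV. \<Sum>m\<in>UNIV. \<Sum>n\<in>UNIV.
      E l $ g * E i $ a * E j $ b * cov12 x \<epsilon> (Kc x \<epsilon>) u g m a b * hmet x \<epsilon> u m n * E k $ n)"

text \<open>T^j_{,i} = h(\<nabla>^_{e_i} T, e_j).\<close>
definition Tder :: "(real^'n \<Rightarrow> real^'m) \<Rightarrow> real \<Rightarrow> real^'n \<Rightarrow> ('n \<Rightarrow> real^'n) \<Rightarrow> 'n \<Rightarrow> 'n \<Rightarrow> real" where
  "Tder x \<epsilon> u E j i = (\<Sum>g\<in>UNIV. \<Sum>m\<in>UNIV. \<Sum>n\<in>UNIV.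
      E i $ g * covT x \<epsilon> u g m * hmet x \<epsilon> u m n * E j $ n)"

definition normsq_DK where
  "normsq_DK x \<epsilon> u E = (\<Sum>i\<in>UNIV. \<Sum>j\<in>UNIV. \<Sum>k\<in>UNIV. \<Sum>l\<in>UNIV. (Kder x \<epsilon> u E k i j l)^2)"

definition normsq_DT where
  "normsq_DT x \<epsilon> u E = (\<Sum>i\<in>UNIV. \<Sum>j\<in>UNIV. (Tder x \<epsilon> u E j i)^2)"

end

theory Submission
  imports Defs
begin

lemma pd_cong:
  assumes "open U" "u \<in> U" "\<And>v. v \<in> U \<Longrightarrow> F v = G v"
  shows "pd F i u = pd G i u"
proof -
  have "(F has_derivative f') (at u) \<longleftrightarrow> (G has_derivative f') (at u)" for f'
  proof
    assume "(F has_derivative f') (at u)"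
    then show "(G has_derivative f') (at u)"
      using has_derivative_transform_within_open[of F f' u UNIV U G] assms by auto
  next
    assume "(G has_derivative f') (at u)"
    then show "(F has_derivative f') (at u)"
      using has_derivative_transform_within_open[of G f' u UNIV U F] assms by auto
  qed
  then show ?thesis unfolding pd_def frechet_derivative_def by simp
qed

lemma pdl_cong:
  assumes "open U" "\<And>v. v \<in> U \<Longrightarrow> F v = G v" "u \<in> U"
  shows "pdl F is u = pdl G is u"
  using assms(3)
proof (induction "is" arbitrary: u)
  case Nil
  then show ?case using assms by simp
next
  case (Cons i "is")
  then show ?case using pd_cong[OF assms(1) Cons(2), of "pdl F is" "pdl G is"] by simp
qed

lemma pdl_snoc: "pdl F (is @ [i]) = pdl (pd F i) is"
  by (induction "is") auto

lemma pd_has_derivative: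
  "F differentiable (at u) \<Longrightarrow> (F has_derivative (\<lambda>h. frechet_derivative F (at u) h)) (at u)"
  using frechet_derivative_works by auto

lemma pd_eqI:
  assumes "(F has_derivative F') (at u)"
  shows "pd F i u = F' (axis i 1)"
  using frechet_derivative_at[OF assms] unfolding pd_def by simp

definition smN :: "(real^'n) set \<Rightarrow> nat \<Rightarrow> (real^'n \<Rightarrow> 'b::real_normed_vector) \<Rightarrow> bool" where
  "smN U N F \<longleftrightarrow> (\<forall>is. length is \<le> N \<longrightarrow> pdl F is differentiable_on U)"

definition sm :: "(real^'n) set \<Rightarrow> (real^'n \<Rightarrow> 'b::real_normed_vector) \<Rightarrow> bool" where
  "sm U F \<longleftrightarrow> (\<forall>N. smN U N F)"

lemma sm_iff_smooth: "smooth_on_open F U \<longleftrightarrow> open U \<and> sm U F"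
  unfolding smooth_on_open_def sm_def smN_def by auto

lemma smN_0: "smN U 0 F \<longleftrightarrow> F differentiable_on U"
  unfolding smN_def by auto

lemma smN_Suc: "smN U (Suc N) F \<longleftrightarrow> F differentiable_on U \<and> (\<forall>i. smN U N (pd F i))"
proof
  assume a: "smN U (Suc N) F"
  show "F differentiable_on U \<and> (\<forall>i. smN U N (pd F i))"
  proof
    show "F differentiable_on U" using a[unfolded smN_def, rule_format, of "[]"] by simp
    show "\<forall>i. smN U N (pd F i)"
      unfolding smN_def
    proof (intro allI impI)
      fix i and "is" :: "'a list" assume "length is \<le> N"
      then have "length (is @ [i]) \<le> Suc N" by simp
      then show "pdl (pd F i) is differentiable_on U" using a[unfolded smN_def, rule_format, of "is @ [i]"]
        by (simp add: pdl_snoc)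
    qed
  qed
next
  assume a: "F differentiable_on U \<and> (\<forall>i. smN U N (pd F i))"
  show "smN U (Suc N) F"
    unfolding smN_def
  proof (intro allI impI)
    fix "is" :: "'a list" assume l: "length is \<le> Suc N"
    show "pdl F is differentiable_on U"
    proof (cases "is" rule: rev_cases)
      case Nil
      then show ?thesis using a by simp
    next
      case (snoc js i)
      then show ?thesis using a l unfolding smN_def by (simp add: pdl_snoc)
    qed
  qed
qed

lemma smN_mono: "smN U N F \<Longrightarrow> M \<le> N \<Longrightarrow> smN U M F"
  unfolding smN_def by auto

lemma sm_smN: "sm U F \<Longrightarrow> smN U N F"
  unfolding sm_def by auto

lemma sm_diff: "sm U F \<Longrightarrow> F differentiable_on U"
  unfolding sm_def using smN_0 by auto

lemma sm_pd: "sm U F \<Longrightarrow> sm U (pd F i)"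
  unfolding sm_def using smN_Suc[of U _ F] by simp

lemma diff_on_cong:
  assumes "open U" "\<And>v. v \<in> U \<Longrightarrow> F v = G v" "F differentiable_on U"
  shows "G differentiable_on U"
proof -
  have "G differentiable (at u)" if "u \<in> U" for u
  proof -
    have "F differentiable (at u)" using assms that differentiable_on_eq_differentiable_at by auto
    then obtain f' where "(F has_derivative f') (at u)" unfolding differentiable_def by blast
    then have "(G has_derivative f') (at u)"
      using has_derivative_transform_within_open[of F f' u UNIV U G] assms that by auto
    then show ?thesis unfolding differentiable_def by blast
  qed
  then show ?thesis using assms(1) differentiable_on_eq_differentiable_at by auto
qed

lemma smN_cong:
  assumes "open U" "\<And>v. v \<in> U \<Longrightarrow> F v = G v" "smN U N F"
  shows "smN U N G"
  unfolding smN_def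
proof (intro allI impI)
  fix "is" :: "'a list" assume "length is \<le> N"
  then have "pdl F is differentiable_on U" using assms(3) unfolding smN_def by auto
  then show "pdl G is differentiable_on U"
    using diff_on_cong[OF assms(1), of "pdl F is" "pdl G is"] pdl_cong[OF assms(1,2)] by auto
qed

lemma sm_cong:
  assumes "open U" "\<And>v. v \<in> U \<Longrightarrow> F v = G v" "sm U F"
  shows "sm U G"
  using smN_cong[OF assms(1,2)] assms(3) unfolding sm_def by auto

lemma diff_at: "open U \<Longrightarrow> F differentiable_on U \<Longrightarrow> u \<in> U \<Longrightarrow> F differentiable (at u)"
  using differentiable_on_eq_differentiable_at by auto

lemma sm_diff_at: "open U \<Longrightarrow> sm U F \<Longrightarrow> u \<in> U \<Longrightarrow> F differentiable (at u)"
  using diff_at[of U F u] sm_diff[of U F] by simp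

lemma pd_add:
  assumes "F differentiable (at u)" "G differentiable (at u)"
  shows "pd (\<lambda>v. F v + G v) i u = pd F i u + pd G i u"
proof -
  have "((\<lambda>v. F v + G v) has_derivative (\<lambda>h. frechet_derivative F (at u) h + frechet_derivative G (at u) h)) (at u)"
    using pd_has_derivative[OF assms(1)] pd_has_derivative[OF assms(2)] by (intro has_derivative_add)
  from pd_eqI[OF this, of i] show ?thesis by (simp add: pd_def)
qed

lemma pd_diff:
  assumes "F differentiable (at u)" "G differentiable (at u)"
  shows "pd (\<lambda>v. F v - G v) i u = pd F i u - pd G i u"
proof -
  have "((\<lambda>v. F v - G v) has_derivative (\<lambda>h. frechet_derivative F (at u) h - frechet_derivative G (at u) h)) (at u)"
    using pd_has_derivative[OF assms(1)] pd_has_derivative[OF assms(2)] by (intro has_derivative_diff)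
  from pd_eqI[OF this, of i] show ?thesis by (simp add: pd_def)
qed

lemma pd_mult:
  fixes F G :: "real^'n \<Rightarrow> real"
  assumes "F differentiable (at u)" "G differentiable (at u)"
  shows "pd (\<lambda>v. F v * G v) i u = pd F i u * G u + F u * pd G i u"
proof -
  have "((\<lambda>v. F v * G v) has_derivative (\<lambda>h. F u * frechet_derivative G (at u) h + frechet_derivative F (at u) h * G u)) (at u)"
    using pd_has_derivative[OF assms(1)] pd_has_derivative[OF assms(2)] by (intro has_derivative_mult)
  from pd_eqI[OF this, of i] show ?thesis by (simp add: pd_def add.commute)
qed

lemma pd_scaleR:
  fixes F :: "real^'n \<Rightarrow> real" and G :: "real^'n \<Rightarrow> 'b::real_normed_vector"
  assumes "F differentiable (at u)" "G differentiable (at u)"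
  shows "pd (\<lambda>v. F v *\<^sub>R G v) i u = pd F i u *\<^sub>R G u + F u *\<^sub>R pd G i u"
proof -
  have "((\<lambda>v. F v *\<^sub>R G v) has_derivative (\<lambda>h. F u *\<^sub>R frechet_derivative G (at u) h + frechet_derivative F (at u) h *\<^sub>R G u)) (at u)"
    using pd_has_derivative[OF assms(1)] pd_has_derivative[OF assms(2)] by (intro has_derivative_scaleR)
  from pd_eqI[OF this, of i] show ?thesis by (simp add: pd_def add.commute)
qed

lemma pd_const: "pd (\<lambda>v. c) i u = 0"
proof -
  have "((\<lambda>v. c) has_derivative (\<lambda>h. 0)) (at u)" by (rule has_derivative_const)
  from pd_eqI[OF this, of i] show ?thesis by (simp add: pd_def)
qed

lemma pd_sum:
  assumes "finite S" "\<And>s. s \<in> S \<Longrightarrow> F s differentiable (at u)"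
  shows "pd (\<lambda>v. \<Sum>s\<in>S. F s v) i u = (\<Sum>s\<in>S. pd (F s) i u)"
proof -
  have "((\<lambda>v. \<Sum>s\<in>S. F s v) has_derivative (\<lambda>h. \<Sum>s\<in>S. frechet_derivative (F s) (at u) h)) (at u)"
    using pd_has_derivative assms by (intro has_derivative_sum) auto
  from pd_eqI[OF this, of i] show ?thesis by (simp add: pd_def)
qed

lemma pd_inverse:
  fixes F :: "real^'n \<Rightarrow> real"
  assumes "F differentiable (at u)" "F u \<noteq> 0"
  shows "pd (\<lambda>v. inverse (F v)) i u = - (pd F i u * (inverse (F u) * inverse (F u)))"
proof -
  have "((\<lambda>v. inverse (F v)) has_derivative (\<lambda>h. - (inverse (F u) * frechet_derivative F (at u) h * inverse (F u)))) (at u)"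
    by (rule Deriv.has_derivative_inverse[OF assms(2) pd_has_derivative[OF assms(1)]])
  from pd_eqI[OF this, of i] show ?thesis by (simp add: pd_def algebra_simps)
qed

lemma pd_nth:
  fixes F :: "real^'n \<Rightarrow> real^'m"
  assumes "F differentiable (at u)"
  shows "pd (\<lambda>v. F v $ m) i u = pd F i u $ m"
proof -
  have "((\<lambda>v. F v $ m) has_derivative (\<lambda>h. frechet_derivative F (at u) h $ m)) (at u)"
    by (rule bounded_linear.has_derivative[OF bounded_linear_vec_nth pd_has_derivative[OF assms(1)]])
  from pd_eqI[OF this, of i] show ?thesis by (simp add: pd_def)
qed



context fixes U :: "(real^'n) set" assumes opU: "open U" begin

lemma smN_const: "smN U N (\<lambda>v. c)"
proof (induction N arbitrary: c)
  case 0 then show ?case by (simp add: smN_0)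
next
  case (Suc N)
  have "pd (\<lambda>v::real^'n. c) i = (\<lambda>v. 0)" for i by (rule ext) (rule pd_const)
  then show ?case using Suc by (simp add: smN_Suc)
qed

lemma smN_add: "smN U N F \<Longrightarrow> smN U N G \<Longrightarrow> smN U N (\<lambda>v. F v + G v)"
proof (induction N arbitrary: F G)
  case 0 then show ?case by (simp add: smN_0 differentiable_on_add)
next
  case (Suc N)
  have dF: "F differentiable_on U" and dG: "G differentiable_on U" using Suc.prems unfolding smN_Suc by auto
  show ?case unfolding smN_Suc
  proof (intro conjI allI)
    show "(\<lambda>v. F v + G v) differentiable_on U" using dF dG by (rule differentiable_on_add)
    fix i
    have "smN U N (pd F i)" "smN U N (pd G i)" using Suc.prems unfolding smN_Suc by auto
    then have "smN U N (\<lambda>v. pd F i v + pd G i v)" by (rule Suc.IH)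
    moreover have "pd F i v + pd G i v = pd (\<lambda>v. F v + G v) i v" if "v \<in> U" for v
      using pd_add[OF diff_at[OF opU dF that] diff_at[OF opU dG that]] by simp
    ultimately show "smN U N (pd (\<lambda>v. F v + G v) i)" by (rule smN_cong[OF opU, rotated])
  qed
qed

lemma smN_diff: "smN U N F \<Longrightarrow> smN U N G \<Longrightarrow> smN U N (\<lambda>v. F v - G v)"
proof (induction N arbitrary: F G)
  case 0 then show ?case by (simp add: smN_0 differentiable_on_diff)
next
  case (Suc N)
  have dF: "F differentiable_on U" and dG: "G differentiable_on U" using Suc.prems unfolding smN_Suc by auto
  show ?case unfolding smN_Suc
  proof (intro conjI allI)
    show "(\<lambda>v. F v - G v) differentiable_on U" using dF dG by (rule differentiable_on_diff)
    fix i
    have "smN U N (pd F i)" "smN U N (pd G i)" using Suc.prems unfolding smN_Suc by auto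
    then have "smN U N (\<lambda>v. pd F i v - pd G i v)" by (rule Suc.IH)
    moreover have "pd F i v - pd G i v = pd (\<lambda>v. F v - G v) i v" if "v \<in> U" for v
      using pd_diff[OF diff_at[OF opU dF that] diff_at[OF opU dG that]] by simp
    ultimately show "smN U N (pd (\<lambda>v. F v - G v) i)" by (rule smN_cong[OF opU, rotated])
  qed
qed

lemma smN_mult:
  fixes F G :: "real^'n \<Rightarrow> real"
  shows "smN U N F \<Longrightarrow> smN U N G \<Longrightarrow> smN U N (\<lambda>v. F v * G v)"
proof (induction N arbitrary: F G)
  case 0 then show ?case by (simp add: smN_0 differentiable_on_mult)
next
  case (Suc N)
  have dF: "F differentiable_on U" and dG: "G differentiable_on U" using Suc.prems unfolding smN_Suc by auto
  show ?case unfolding smN_Suc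
  proof (intro conjI allI)
    show "(\<lambda>v. F v * G v) differentiable_on U" using dF dG by (rule differentiable_on_mult)
    fix i
    have FN: "smN U N F" "smN U N G" using Suc.prems smN_mono[of U "Suc N" _ N] by auto
    have PN: "smN U N (pd F i)" "smN U N (pd G i)" using Suc.prems unfolding smN_Suc by auto
    have "smN U N (\<lambda>v. pd F i v * G v)" "smN U N (\<lambda>v. F v * pd G i v)"
      using Suc.IH[OF PN(1) FN(2)] Suc.IH[OF FN(1) PN(2)] by auto
    then have "smN U N (\<lambda>v. pd F i v * G v + F v * pd G i v)" by (rule smN_add)
    moreover have "pd F i v * G v + F v * pd G i v = pd (\<lambda>v. F v * G v) i v" if "v \<in> U" for v
      using pd_mult[OF diff_at[OF opU dF that] diff_at[OF opU dG that]] by simp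
    ultimately show "smN U N (pd (\<lambda>v. F v * G v) i)" by (rule smN_cong[OF opU, rotated])
  qed
qed

lemma smN_scaleR:
  fixes F :: "real^'n \<Rightarrow> real" and G :: "real^'n \<Rightarrow> 'b::real_normed_vector"
  shows "smN U N F \<Longrightarrow> smN U N G \<Longrightarrow> smN U N (\<lambda>v. F v *\<^sub>R G v)"
proof (induction N arbitrary: F G)
  case 0 then show ?case by (simp add: smN_0 differentiable_on_scaleR)
next
  case (Suc N)
  have dF: "F differentiable_on U" and dG: "G differentiable_on U" using Suc.prems unfolding smN_Suc by auto
  show ?case unfolding smN_Suc
  proof (intro conjI allI)
    show "(\<lambda>v. F v *\<^sub>R G v) differentiable_on U" using dF dG by (rule differentiable_on_scaleR)
    fix i
    have FN: "smN U N F" "smN U N G" using Suc.prems smN_mono[of U "Suc N" _ N] by auto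
    have PN: "smN U N (pd F i)" "smN U N (pd G i)" using Suc.prems unfolding smN_Suc by auto
    have "smN U N (\<lambda>v. pd F i v *\<^sub>R G v)" "smN U N (\<lambda>v. F v *\<^sub>R pd G i v)"
      using Suc.IH[OF PN(1) FN(2)] Suc.IH[OF FN(1) PN(2)] by auto
    then have "smN U N (\<lambda>v. pd F i v *\<^sub>R G v + F v *\<^sub>R pd G i v)" by (rule smN_add)
    moreover have "pd F i v *\<^sub>R G v + F v *\<^sub>R pd G i v = pd (\<lambda>v. F v *\<^sub>R G v) i v" if "v \<in> U" for v
      using pd_scaleR[OF diff_at[OF opU dF that] diff_at[OF opU dG that]] by simp
    ultimately show "smN U N (pd (\<lambda>v. F v *\<^sub>R G v) i)" by (rule smN_cong[OF opU, rotated])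
  qed
qed

lemma diff_on_nth:
  fixes F :: "real^'n \<Rightarrow> real^'m"
  assumes "F differentiable_on U" shows "(\<lambda>v. F v $ m) differentiable_on U"
  unfolding differentiable_on_def
proof
  fix v assume "v \<in> U"
  then obtain f' where "(F has_derivative f') (at v within U)" using assms
    unfolding differentiable_on_def differentiable_def by blast
  from bounded_linear.has_derivative[OF bounded_linear_vec_nth this]
  show "(\<lambda>v. F v $ m) differentiable (at v within U)" unfolding differentiable_def by blast
qed

lemma smN_nth:
  fixes F :: "real^'n \<Rightarrow> real^'m"
  shows "smN U N F \<Longrightarrow> smN U N (\<lambda>v. F v $ m)"
proof (induction N arbitrary: F)
  case 0
  then have dF: "F differentiable_on U" by (simp add: smN_0)
  have "(\<lambda>v. F v $ m) differentiable_on U"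
    using diff_on_nth[OF dF] by simp
  then show ?case by (simp add: smN_0)
next
  case (Suc N)
  have dF: "F differentiable_on U" using Suc.prems unfolding smN_Suc by auto
  show ?case unfolding smN_Suc
  proof (intro conjI allI)
    show "(\<lambda>v. F v $ m) differentiable_on U"
      using diff_on_nth[OF dF] by simp
    fix i
    have "smN U N (pd F i)" using Suc.prems unfolding smN_Suc by auto
    then have "smN U N (\<lambda>v. pd F i v $ m)" by (rule Suc.IH)
    moreover have "pd F i v $ m = pd (\<lambda>v. F v $ m) i v" if "v \<in> U" for v
      using pd_nth[OF diff_at[OF opU dF that]] by simp
    ultimately show "smN U N (pd (\<lambda>v. F v $ m) i)" by (rule smN_cong[OF opU, rotated])
  qed
qed

lemma smN_inverse:
  fixes F :: "real^'n \<Rightarrow> real"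
  assumes "sm U F" "\<And>v. v \<in> U \<Longrightarrow> F v \<noteq> 0"
  shows "smN U N (\<lambda>v. inverse (F v))"
proof (induction N)
  have dF: "F differentiable_on U" using assms sm_diff by auto
  have dI: "(\<lambda>v. inverse (F v)) differentiable_on U"
    unfolding differentiable_on_def
  proof
    fix v assume v: "v \<in> U"
    have "F differentiable (at v within U)" using dF v differentiable_on_def by auto
    then show "(\<lambda>v. inverse (F v)) differentiable (at v within U)"
      using assms(2)[OF v] differentiable_inverse by blast
  qed
  {
    case 0 then show ?case using dI by (simp add: smN_0)
  next
    case (Suc N)
    show ?case unfolding smN_Suc
    proof (intro conjI allI)
      show "(\<lambda>v. inverse (F v)) differentiable_on U" by (rule dI)
      fix i
      have "smN U N (pd F i)" using sm_pd[OF assms(1)] sm_smN by auto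
      then have "smN U N (\<lambda>v. pd F i v * (inverse (F v) * inverse (F v)))"
        using Suc smN_mult[of N "\<lambda>v. inverse (F v)" "\<lambda>v. inverse (F v)"] smN_mult[of N "pd F i"] by auto
      then have "smN U N (\<lambda>v. 0 - pd F i v * (inverse (F v) * inverse (F v)))"
        by (rule smN_diff[OF smN_const])
      moreover have "0 - pd F i v * (inverse (F v) * inverse (F v)) = pd (\<lambda>v. inverse (F v)) i v" if "v \<in> U" for v
        using pd_inverse[OF diff_at[OF opU dF that] assms(2)[OF that]] by simp
      ultimately show "smN U N (pd (\<lambda>v. inverse (F v)) i)" by (rule smN_cong[OF opU, rotated])
    qed
  }
qed

lemma smN_sum:
  assumes "finite S" "\<And>s. s \<in> S \<Longrightarrow> smN U N (F s)"
  shows "smN U N (\<lambda>v. \<Sum>s\<in>S. F s v)"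
  using assms
proof (induction S rule: finite_induct)
  case empty then show ?case by (simp add: smN_const)
next
  case (insert x S)
  then show ?case by (simp add: smN_add)
qed

lemma smN_prod:
  fixes F :: "'i \<Rightarrow> real^'n \<Rightarrow> real"
  assumes "finite S" "\<And>s. s \<in> S \<Longrightarrow> smN U N (F s)"
  shows "smN U N (\<lambda>v. \<Prod>s\<in>S. F s v)"
  using assms
proof (induction S rule: finite_induct)
  case empty then show ?case by (simp add: smN_const)
next
  case (insert x S)
  then show ?case by (simp add: smN_mult)
qed

lemma sm_const: "sm U (\<lambda>v. c)" unfolding sm_def by (auto intro: smN_const)
lemma sm_add: "sm U F \<Longrightarrow> sm U G \<Longrightarrow> sm U (\<lambda>v. F v + G v)" unfolding sm_def by (auto intro: smN_add)
lemma sm_diff': "sm U F \<Longrightarrow> sm U G \<Longrightarrow> sm U (\<lambda>v. F v - G v)" unfolding sm_def by (auto intro: smN_diff)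
lemma sm_mult: "sm U F \<Longrightarrow> sm U G \<Longrightarrow> sm U (\<lambda>v. F v * G v :: real)" unfolding sm_def by (auto intro: smN_mult)
lemma sm_scaleR: "sm U F \<Longrightarrow> sm U G \<Longrightarrow> sm U (\<lambda>v. F v *\<^sub>R G v)" unfolding sm_def by (auto intro: smN_scaleR)
lemma sm_nth: "sm U (F :: real^'n \<Rightarrow> real^'m) \<Longrightarrow> sm U (\<lambda>v. F v $ m)" unfolding sm_def by (auto intro: smN_nth)
lemma sm_inverse: "sm U F \<Longrightarrow> (\<And>v. v \<in> U \<Longrightarrow> F v \<noteq> 0) \<Longrightarrow> sm U (\<lambda>v. inverse (F v) :: real)"
  unfolding sm_def[of U "\<lambda>v. inverse (F v)"] by (auto intro: smN_inverse)
lemma sm_sum: "finite S \<Longrightarrow> (\<And>s. s \<in> S \<Longrightarrow> sm U (F s)) \<Longrightarrow> sm U (\<lambda>v. \<Sum>s\<in>S. F s v)"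
  unfolding sm_def by (auto intro: smN_sum)
lemma sm_prod: "finite S \<Longrightarrow> (\<And>s. s \<in> S \<Longrightarrow> sm U (F s)) \<Longrightarrow> sm U (\<lambda>v. \<Prod>s\<in>S. F s v :: real)"
  unfolding sm_def by (auto intro: smN_prod)

end


lemma line_deriv:
  fixes f :: "real^'n \<Rightarrow> real"
  assumes "f differentiable (at (p + t *\<^sub>R e))"
  shows "((\<lambda>s. f (p + s *\<^sub>R e)) has_real_derivative (frechet_derivative f (at (p + t *\<^sub>R e)) e)) (at t)"
proof -
  let ?D = "frechet_derivative f (at (p + t *\<^sub>R e))"
  have g: "((\<lambda>s. p + s *\<^sub>R e) has_derivative (\<lambda>s. s *\<^sub>R e)) (at t)"
    by (auto intro!: derivative_eq_intros)
  have fD: "(f has_derivative ?D) (at (p + t *\<^sub>R e))" using assms frechet_derivative_works by blast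
  have 1: "((\<lambda>s. f (p + s *\<^sub>R e)) has_derivative (\<lambda>s. ?D (s *\<^sub>R e))) (at t)"
    using has_derivative_compose[OF g fD] by simp
  have 2: "(\<lambda>s. ?D (s *\<^sub>R e)) = (*) (?D e)"
    by (rule ext) (simp add: linear_scale[OF has_derivative_linear[OF fD]])
  from 1 show ?thesis by (simp only: 2 has_field_derivative_def)
qed

lemma norm_axis1: "norm (axis i (1::real)) = 1"
  by (rule norm_axis_1)

lemma mvt_step:
  fixes f :: "real^'n \<Rightarrow> real"
  assumes dU: "f differentiable_on U" and opU: "open U"
    and h: "0 < h" and inU: "\<And>t. 0 \<le> t \<Longrightarrow> t \<le> h \<Longrightarrow> a + t *\<^sub>R e \<in> U \<and> b + t *\<^sub>R e \<in> U"
  shows "\<exists>t. 0 < t \<and> t < h \<and> (f (a + h *\<^sub>R e) - f (b + h *\<^sub>R e)) - (f a - f b)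
      = h * (frechet_derivative f (at (a + t *\<^sub>R e)) e - frechet_derivative f (at (b + t *\<^sub>R e)) e)"
proof -
  have "((\<lambda>s. f (a + s *\<^sub>R e) - f (b + s *\<^sub>R e)) has_real_derivative
      (frechet_derivative f (at (a + t *\<^sub>R e)) e - frechet_derivative f (at (b + t *\<^sub>R e)) e)) (at t)"
    if "0 \<le> t" "t \<le> h" for t
  proof -
    have "f differentiable (at (a + t *\<^sub>R e))" "f differentiable (at (b + t *\<^sub>R e))"
      using inU[OF that] diff_at[OF opU dU] by auto
    then show ?thesis by (intro DERIV_diff line_deriv)
  qed
  from MVT2[OF h this] show ?thesis by auto
qed

lemma abs_est_aux:
  fixes a b c p q k E :: real
  assumes "\<bar>a - c - p\<bar> \<le> E" "\<bar>b - c - q\<bar> \<le> E" "p - q = k"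
  shows "\<bar>(a - b) - k\<bar> \<le> 2 * E"
  using assms by (simp add: abs_le_iff)

lemma abs_est_aux2:
  fixes a b c E :: real
  assumes "\<bar>a - b\<bar> \<le> E" "\<bar>a - c\<bar> \<le> E"
  shows "\<bar>b - c\<bar> \<le> 2 * E"
  using assms by (simp add: abs_le_iff)

lemma schwarz:
  fixes f :: "real^'n \<Rightarrow> real"
  assumes opU: "open U" and uU: "u \<in> U" and df: "f differentiable_on U"
    and d1: "pd f i differentiable (at u)" and d2: "pd f j differentiable (at u)"
  shows "pd (pd f i) j u = pd (pd f j) i u"
proof (cases "i = j")
  case True then show ?thesis by simp
next
  case False
  define e1 where "e1 = axis i (1::real)"
  define e2 where "e2 = axis j (1::real)"
  have ne1: "norm e1 = 1" and ne2: "norm e2 = 1" unfolding e1_def e2_def by (simp_all add: norm_axis1)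
  define g1 where "g1 = pd f i"
  define g2 where "g2 = pd f j"
  define L1 where "L1 = frechet_derivative g1 (at u)"
  define L2 where "L2 = frechet_derivative g2 (at u)"
  have D1: "(g1 has_derivative L1) (at u)" unfolding g1_def L1_def using d1 frechet_derivative_works by blast
  have D2: "(g2 has_derivative L2) (at u)" unfolding g2_def L2_def using d2 frechet_derivative_works by blast
  have lin1: "linear L1" and lin2: "linear L2" using D1 D2 has_derivative_linear by auto
  have goal: "pd (pd f i) j u = L1 e2" "pd (pd f j) i u = L2 e1"
    unfolding L1_def L2_def g1_def g2_def e1_def e2_def pd_def by simp_all
  obtain r where r: "r > 0" "ball u r \<subseteq> U" using opU uU open_contains_ball by blast
  have fde: "frechet_derivative f (at v) e1 = g1 v" "frechet_derivative f (at v) e2 = g2 v" for v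
    unfolding g1_def g2_def e1_def e2_def pd_def by simp_all
  let ?D = "\<lambda>h. f (u + h *\<^sub>R e1 + h *\<^sub>R e2) - f (u + h *\<^sub>R e1) - f (u + h *\<^sub>R e2) + f u"
  have key: "\<bar>L1 e2 - L2 e1\<bar> \<le> 8 * \<epsilon>" if eps: "\<epsilon> > 0" for \<epsilon>
  proof -
    obtain \<delta>1 where \<delta>1: "\<delta>1 > 0" "\<And>y. norm (y - u) < \<delta>1 \<Longrightarrow> norm (g1 y - g1 u - L1 (y - u)) \<le> \<epsilon> * norm (y - u)"
      using D1 eps unfolding has_derivative_at_alt by blast
    obtain \<delta>2 where \<delta>2: "\<delta>2 > 0" "\<And>y. norm (y - u) < \<delta>2 \<Longrightarrow> norm (g2 y - g2 u - L2 (y - u)) \<le> \<epsilon> * norm (y - u)"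
      using D2 eps unfolding has_derivative_at_alt by blast
    define h where "h = min r (min \<delta>1 \<delta>2) / 4"
    have h0: "h > 0" unfolding h_def using r \<delta>1 \<delta>2 by auto
    have hr: "2 * h < r" "2 * h < \<delta>1" "2 * h < \<delta>2" unfolding h_def using r \<delta>1 \<delta>2 by auto
    have nrm: "norm (s *\<^sub>R e1 + t *\<^sub>R e2) \<le> 2 * h" if "0 \<le> s" "s \<le> h" "0 \<le> t" "t \<le> h" for s t
    proof -
      have "norm (s *\<^sub>R e1 + t *\<^sub>R e2) \<le> norm (s *\<^sub>R e1) + norm (t *\<^sub>R e2)" by (rule norm_triangle_ineq)
      also have "\<dots> = s + t" using that ne1 ne2 by simp
      finally show ?thesis using that by simp
    qed
    have inb: "u + (s *\<^sub>R e1 + t *\<^sub>R e2) \<in> U" if "0 \<le> s" "s \<le> h" "0 \<le> t" "t \<le> h" for s t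
    proof -
      have "dist u (u + (s *\<^sub>R e1 + t *\<^sub>R e2)) = norm (s *\<^sub>R e1 + t *\<^sub>R e2)"
        by (subst dist_commute) (simp add: dist_norm)
      then have "dist u (u + (s *\<^sub>R e1 + t *\<^sub>R e2)) < r" using nrm[OF that] hr by simp
      then show ?thesis using r by auto
    qed
    have "\<exists>t. 0 < t \<and> t < h \<and> (f ((u + h *\<^sub>R e2) + h *\<^sub>R e1) - f (u + h *\<^sub>R e1)) - (f (u + h *\<^sub>R e2) - f u)
      = h * (frechet_derivative f (at ((u + h *\<^sub>R e2) + t *\<^sub>R e1)) e1 - frechet_derivative f (at (u + t *\<^sub>R e1)) e1)"
    proof (rule mvt_step[OF df opU h0, of "u + h *\<^sub>R e2" e1 u, simplified add_0_right])
      fix t :: real assume "0 \<le> t" "t \<le> h"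
      then show "u + h *\<^sub>R e2 + t *\<^sub>R e1 \<in> U \<and> u + t *\<^sub>R e1 \<in> U"
        using inb[of t h] inb[of t 0] h0 by (simp_all add: algebra_simps)
    qed
    then obtain t1 where t1: "0 < t1" "t1 < h" "?D h = h * (g1 (u + (t1 *\<^sub>R e1 + h *\<^sub>R e2)) - g1 (u + (t1 *\<^sub>R e1 + 0 *\<^sub>R e2)))"
      unfolding fde by (auto simp: algebra_simps)
    have "\<exists>t. 0 < t \<and> t < h \<and> (f ((u + h *\<^sub>R e1) + h *\<^sub>R e2) - f (u + h *\<^sub>R e2)) - (f (u + h *\<^sub>R e1) - f u)
      = h * (frechet_derivative f (at ((u + h *\<^sub>R e1) + t *\<^sub>R e2)) e2 - frechet_derivative f (at (u + t *\<^sub>R e2)) e2)"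
    proof (rule mvt_step[OF df opU h0, of "u + h *\<^sub>R e1" e2 u, simplified add_0_right])
      fix t :: real assume "0 \<le> t" "t \<le> h"
      then show "u + h *\<^sub>R e1 + t *\<^sub>R e2 \<in> U \<and> u + t *\<^sub>R e2 \<in> U"
        using inb[of h t] inb[of 0 t] h0 by (simp_all add: algebra_simps)
    qed
    then obtain t2 where t2: "0 < t2" "t2 < h" "?D h = h * (g2 (u + (h *\<^sub>R e1 + t2 *\<^sub>R e2)) - g2 (u + (0 *\<^sub>R e1 + t2 *\<^sub>R e2)))"
      unfolding fde by (auto simp: algebra_simps)
    have est1: "\<bar>g1 (u + (s *\<^sub>R e1 + t *\<^sub>R e2)) - g1 u - L1 (s *\<^sub>R e1 + t *\<^sub>R e2)\<bar> \<le> \<epsilon> * (2 * h)"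
      if "0 \<le> s" "s \<le> h" "0 \<le> t" "t \<le> h" for s t
    proof -
      have "norm (s *\<^sub>R e1 + t *\<^sub>R e2) < \<delta>1" using nrm[OF that] hr by simp
      then have "norm (g1 (u + (s *\<^sub>R e1 + t *\<^sub>R e2)) - g1 u - L1 (s *\<^sub>R e1 + t *\<^sub>R e2)) \<le> \<epsilon> * norm (s *\<^sub>R e1 + t *\<^sub>R e2)"
        using \<delta>1(2)[of "u + (s *\<^sub>R e1 + t *\<^sub>R e2)"] by simp
      also have "\<dots> \<le> \<epsilon> * (2 * h)" using nrm[OF that] eps by simp
      finally show ?thesis by simp
    qed
    have est2: "\<bar>g2 (u + (s *\<^sub>R e1 + t *\<^sub>R e2)) - g2 u - L2 (s *\<^sub>R e1 + t *\<^sub>R e2)\<bar> \<le> \<epsilon> * (2 * h)"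
      if "0 \<le> s" "s \<le> h" "0 \<le> t" "t \<le> h" for s t
    proof -
      have "norm (s *\<^sub>R e1 + t *\<^sub>R e2) < \<delta>2" using nrm[OF that] hr by simp
      then have "norm (g2 (u + (s *\<^sub>R e1 + t *\<^sub>R e2)) - g2 u - L2 (s *\<^sub>R e1 + t *\<^sub>R e2)) \<le> \<epsilon> * norm (s *\<^sub>R e1 + t *\<^sub>R e2)"
        using \<delta>2(2)[of "u + (s *\<^sub>R e1 + t *\<^sub>R e2)"] by simp
      also have "\<dots> \<le> \<epsilon> * (2 * h)" using nrm[OF that] eps by simp
      finally show ?thesis by simp
    qed
    have l1: "L1 (t1 *\<^sub>R e1 + h *\<^sub>R e2) - L1 (t1 *\<^sub>R e1 + 0 *\<^sub>R e2) = h * L1 e2"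
      using lin1 by (simp add: linear_add linear_scale)
    have l2: "L2 (h *\<^sub>R e1 + t2 *\<^sub>R e2) - L2 (0 *\<^sub>R e1 + t2 *\<^sub>R e2) = h * L2 e1"
      using lin2 by (simp add: linear_add linear_scale)
    have A0: "\<bar>(g1 (u + (t1 *\<^sub>R e1 + h *\<^sub>R e2)) - g1 (u + (t1 *\<^sub>R e1 + 0 *\<^sub>R e2))) - h * L1 e2\<bar> \<le> 2 * (\<epsilon> * (2 * h))"
      by (rule abs_est_aux[OF est1[of t1 h] est1[of t1 0] l1]) (use t1 h0 in auto)
    have A: "\<bar>?D h / h - h * L1 e2\<bar> \<le> \<epsilon> * (4 * h)"
      using A0 t1(3) h0 by simp
    have B0: "\<bar>(g2 (u + (h *\<^sub>R e1 + t2 *\<^sub>R e2)) - g2 (u + (0 *\<^sub>R e1 + t2 *\<^sub>R e2))) - h * L2 e1\<bar> \<le> 2 * (\<epsilon> * (2 * h))"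
      by (rule abs_est_aux[OF est2[of h t2] est2[of 0 t2] l2]) (use t2 h0 in auto)
    have B: "\<bar>?D h / h - h * L2 e1\<bar> \<le> \<epsilon> * (4 * h)"
      using B0 t2(3) h0 by simp
    have "\<bar>h * L1 e2 - h * L2 e1\<bar> \<le> 2 * (\<epsilon> * (4 * h))" by (rule abs_est_aux2[OF A B])
    then have "h * \<bar>L1 e2 - L2 e1\<bar> \<le> h * (8 * \<epsilon>)"
      using h0 by (simp add: abs_mult right_diff_distrib[symmetric])
    then show "\<bar>L1 e2 - L2 e1\<bar> \<le> 8 * \<epsilon>" using h0 by simp
  qed
  have "L1 e2 = L2 e1"
  proof (rule ccontr)
    assume "L1 e2 \<noteq> L2 e1"
    then have "\<bar>L1 e2 - L2 e1\<bar> > 0" by simp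
    from key[of "\<bar>L1 e2 - L2 e1\<bar> / 16"] this show False by simp
  qed
  then show ?thesis using goal by simp
qed



lemma sum_option: "(\<Sum>a\<in>(UNIV :: 'a::finite option set). f a) = f None + (\<Sum>k\<in>UNIV. f (Some k))"
proof -
  have "(UNIV :: 'a option set) = insert None (range Some)" by (rule UNIV_option_conv)
  moreover have "sum f (insert None (range Some)) = f None + sum f (range Some)"
    by (rule sum.insert) auto
  ultimately have "(\<Sum>a\<in>(UNIV :: 'a option set). f a) = f None + (\<Sum>a\<in>range Some. f a)"
    by simp
  also have "(\<Sum>a\<in>range Some. f a) = (\<Sum>k\<in>UNIV. f (Some k))"
    by (simp add: sum.reindex)
  finally show ?thesis .
qed

lemma matrix_inv_props:
  fixes A :: "real^'n^'n"
  assumes "invertible A"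
  shows "A ** matrix_inv A = mat 1" "matrix_inv A ** A = mat 1"
  using someI_ex[OF assms[unfolded invertible_def]] unfolding matrix_inv_def by auto

lemma det_nz_of_ker:
  fixes A :: "real^'n^'n"
  assumes "\<And>c. A *v c = 0 \<Longrightarrow> c = 0"
  shows "det A \<noteq> 0"
proof -
  have "\<exists>B. B ** A = mat 1" using assms matrix_left_invertible_ker by blast
  then have "invertible A" using invertible_left_inverse by blast
  then show ?thesis using invertible_det_nz by blast
qed

lemma matrix_inv_cramer:
  fixes A :: "real^'n^'n"
  assumes d: "det A \<noteq> 0"
  shows "matrix_inv A $ i $ j = det (\<chi> a b. if b = i then (if a = j then 1 else 0) else A $ a $ b) / det A"
proof -
  have inv: "invertible A" using d invertible_det_nz by blast
  define y where "y = (\<chi> a. matrix_inv A $ a $ j)"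
  have "A *v y = (\<chi> a. if a = j then 1 else 0)"
    using matrix_inv_props(1)[OF inv] unfolding y_def
    by (auto simp: vec_eq_iff matrix_vector_mult_def matrix_matrix_mult_def mat_def)
  then have "y = (\<chi> k. det (\<chi> a b. if b = k then (\<chi> a. if a = j then 1 else 0) $ a else A $ a $ b) / det A)"
    using cramer[OF d] by blast
  moreover have "(\<chi> a b. if b = i then (\<chi> a. if a = j then 1 else 0) $ a else A $ a $ b)
     = (\<chi> a b. if b = i then (if a = j then 1 else (0::real)) else A $ a $ b)"
    by (simp add: vec_eq_iff)
  ultimately show ?thesis unfolding y_def by (auto simp: vec_eq_iff)
qed

context fixes U :: "(real^'n) set" assumes opU: "open U" begin

lemma sm_det:
  fixes F :: "'k::finite \<Rightarrow> 'k \<Rightarrow> real^'n \<Rightarrow> real"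
  assumes "\<And>i j. sm U (F i j)"
  shows "sm U (\<lambda>v. det (\<chi> i j. F i j v))"
proof -
  have "sm U (\<lambda>v. \<Sum>p\<in>{p. p permutes (UNIV::'k set)}. of_int (sign p) * (\<Prod>i\<in>UNIV. F i (p i) v))"
    using assms by (intro sm_sum[OF opU] sm_mult[OF opU] sm_const[OF opU] sm_prod[OF opU] finite_permutations) auto
  then show ?thesis unfolding det_def by simp
qed

lemma sm_inner:
  fixes F G :: "real^'n \<Rightarrow> real^'m"
  assumes "sm U F" "sm U G"
  shows "sm U (\<lambda>v. inner (F v) (G v))"
  unfolding inner_vec_def inner_real_def
  using assms by (intro sm_sum[OF opU] sm_mult[OF opU] sm_nth[OF opU]) auto

lemma sm_divide:
  fixes F G :: "real^'n \<Rightarrow> real"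
  assumes "sm U F" "sm U G" "\<And>v. v \<in> U \<Longrightarrow> G v \<noteq> 0"
  shows "sm U (\<lambda>v. F v / G v)"
  unfolding divide_inverse using assms by (intro sm_mult[OF opU] sm_inverse[OF opU]) auto

end



locale cah =
  fixes x :: "real^'n \<Rightarrow> real^'m" and U :: "(real^'n) set" and \<epsilon> :: real
  assumes card: "CARD('m) = CARD('n) + 1" and opU: "open U" and smx: "sm U x"
    and cent: "\<And>u. u \<in> U \<Longrightarrow> centroaffine_at x u" and eps: "\<epsilon> = 1 \<or> \<epsilon> = -1"
    and hp: "\<And>u. u \<in> U \<Longrightarrow> hpos x \<epsilon> u"
begin

definition bvec :: "real^'n \<Rightarrow> 'n option \<Rightarrow> real^'m" where
  "bvec u a = (case a of None \<Rightarrow> x u | Some k \<Rightarrow> pd x k u)"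

definition G :: "real^'n \<Rightarrow> real^'n option^'n option" where
  "G u = (\<chi> a b. inner (bvec u a) (bvec u b))"

definition coef :: "(real^'n \<Rightarrow> real^'m) \<Rightarrow> 'n option \<Rightarrow> real^'n \<Rightarrow> real" where
  "coef W a u = det (\<chi> i j. if j = a then inner (bvec u i) (W u) else inner (bvec u i) (bvec u j)) / det (G u)"

lemma indep:
  assumes u: "u \<in> U" and s: "(\<Sum>a\<in>UNIV. c a *\<^sub>R bvec u a) = 0"
  shows "c a = 0"
proof -
  have "c None *\<^sub>R x u + (\<Sum>k\<in>UNIV. c (Some k) *\<^sub>R pd x k u) = 0"
    using s by (simp add: sum_option bvec_def)
  then have "c None = 0 \<and> (\<forall>k. c (Some k) = 0)"
    using cent[OF u, unfolded centroaffine_at_def, rule_format, of "c None" "\<lambda>k. c (Some k)"] by simp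
  then show ?thesis by (cases a) auto
qed

lemma bvec_inj:
  assumes u: "u \<in> U" shows "inj (bvec u)"
proof (rule injI)
  fix a b assume e: "bvec u a = bvec u b"
  show "a = b"
  proof (rule ccontr)
    assume ab: "a \<noteq> b"
    define c where "c = (\<lambda>z. if z = a then 1 else if z = b then -1 else (0::real))"
    have "(\<Sum>z\<in>UNIV. c z *\<^sub>R bvec u z) = (\<Sum>z\<in>{a,b}. c z *\<^sub>R bvec u z)"
      by (rule sum.mono_neutral_right) (auto simp: c_def)
    also have "\<dots> = 0" using ab e by (simp add: c_def)
    finally have "c a = 0" using indep[OF u] by blast
    then show False by (simp add: c_def)
  qed
qed

lemma spanning:
  assumes u: "u \<in> U"
  shows "\<exists>c. w = (\<Sum>a\<in>UNIV. c a *\<^sub>R bvec u a)"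
proof -
  let ?B = "range (bvec u)"
  have inj: "inj (bvec u)" by (rule bvec_inj[OF u])
  have fin: "finite ?B" by simp
  have "independent ?B"
    unfolding eucl.independent_explicit
  proof (intro conjI allI impI ballI)
    show "finite ?B" by simp
    fix c v assume s: "(\<Sum>v\<in>?B. c v *\<^sub>R v) = 0" and v: "v \<in> ?B"
    have "(\<Sum>v\<in>?B. c v *\<^sub>R v) = (\<Sum>a\<in>UNIV. c (bvec u a) *\<^sub>R bvec u a)"
      using inj by (simp add: sum.reindex)
    then have "\<And>a. c (bvec u a) = 0" using s indep[OF u, of "\<lambda>a. c (bvec u a)"] by simp
    then show "c v = 0" using v by auto
  qed
  moreover have "card ?B = CARD('m)"
    using inj card by (simp add: card_image)
  moreover have "dim (UNIV :: (real^'m) set) = CARD('m)"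
    by (simp add: eucl.dim_UNIV DIM_cart)
  ultimately have "UNIV \<subseteq> span ?B"
    using eucl.card_ge_dim_independent[of ?B UNIV] by simp
  then have "w \<in> span ?B" by auto
  then obtain f where "w = (\<Sum>v\<in>?B. f v *\<^sub>R v)"
    using real_vector.span_finite[OF fin] by auto
  also have "\<dots> = (\<Sum>a\<in>UNIV. f (bvec u a) *\<^sub>R bvec u a)"
    using inj by (simp add: sum.reindex)
  finally have "w = (\<Sum>a\<in>UNIV. (\<lambda>a. f (bvec u a)) a *\<^sub>R bvec u a)" by simp
  then show ?thesis by (intro exI[where x="\<lambda>a. f (bvec u a)"])
qed

lemma G_mult: "(G u *v (\<chi> b. c b)) $ a = inner (bvec u a) (\<Sum>b\<in>UNIV. c b *\<^sub>R bvec u b)"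
  by (simp add: G_def matrix_vector_mult_def inner_sum_right mult.commute)

lemma G_det:
  assumes u: "u \<in> U" shows "det (G u) \<noteq> 0"
proof (rule det_nz_of_ker)
  fix cv assume z: "G u *v cv = 0"
  define S where "S = (\<Sum>b\<in>UNIV. cv $ b *\<^sub>R bvec u b)"
  have cvl: "cv = (\<chi> b. cv $ b)" by simp
  have "inner (bvec u a) S = 0" for a
    using G_mult[of u "\<lambda>b. cv $ b" a] z unfolding S_def by simp
  then have "inner S S = 0"
  proof -
    assume h: "\<And>a. inner (bvec u a) S = 0"
    have "inner S S = (\<Sum>b\<in>UNIV. cv $ b * inner (bvec u b) S)"
      by (subst (1) S_def) (simp add: inner_sum_left)
    also have "\<dots> = 0" using h by simp
    finally show ?thesis .
  qed
  then have "S = 0" by simp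
  then have "cv $ b = 0" for b using indep[OF u, of "\<lambda>b. cv $ b"] unfolding S_def by simp
  then show "cv = 0" by (simp add: vec_eq_iff)
qed

lemma coef_unique:
  assumes u: "u \<in> U" and w: "W u = (\<Sum>b\<in>UNIV. c b *\<^sub>R bvec u b)"
  shows "c a = coef W a u"
proof -
  have "G u *v (\<chi> b. c b) = (\<chi> i. inner (bvec u i) (W u))"
    unfolding w by (simp add: vec_eq_iff G_mult)
  then have "(\<chi> b. c b) = (\<chi> k. det (\<chi> i j. if j = k then (\<chi> i. inner (bvec u i) (W u)) $ i else G u $ i $ j) / det (G u))"
    using cramer[OF G_det[OF u]] by blast
  then have "c a = det (\<chi> i j. if j = a then (\<chi> i. inner (bvec u i) (W u)) $ i else G u $ i $ j) / det (G u)"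
    by (simp add: vec_eq_iff)
  moreover have "(\<chi> i j. if j = a then (\<chi> i. inner (bvec u i) (W u)) $ i else G u $ i $ j)
     = (\<chi> i j. if j = a then inner (bvec u i) (W u) else inner (bvec u i) (bvec u j))"
    by (simp add: vec_eq_iff G_def)
  ultimately show ?thesis unfolding coef_def by simp
qed

lemma coef_works:
  assumes u: "u \<in> U" shows "W u = (\<Sum>a\<in>UNIV. coef W a u *\<^sub>R bvec u a)"
proof -
  obtain c where c: "W u = (\<Sum>a\<in>UNIV. c a *\<^sub>R bvec u a)" using spanning[OF u] by blast
  then have "c a = coef W a u" for a by (rule coef_unique[OF u])
  then show ?thesis using c by simp
qed

lemma sm_bvec: "sm U (\<lambda>u. bvec u a)"
proof (cases a)
  case None then show ?thesis using smx by (simp add: bvec_def)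
next
  case (Some k) then show ?thesis using sm_pd[OF smx] by (simp add: bvec_def)
qed

lemma sm_coef:
  assumes "sm U W" shows "sm U (coef W a)"
proof -
  have "sm U (\<lambda>u. det (\<chi> i j. if j = a then inner (bvec u i) (W u) else inner (bvec u i) (bvec u j)) / det (G u))"
  proof (rule sm_divide[OF opU])
    show "sm U (\<lambda>u. det (\<chi> i j. if j = a then inner (bvec u i) (W u) else inner (bvec u i) (bvec u j)))"
      apply (rule sm_det[OF opU])
      subgoal for i j by (cases "j = a") (auto intro!: sm_inner[OF opU] sm_bvec assms)
      done
    show "sm U (\<lambda>u. det (G u))"
      unfolding G_def by (rule sm_det[OF opU]) (auto intro!: sm_inner[OF opU] sm_bvec)
    show "\<And>u. u \<in> U \<Longrightarrow> det (G u) \<noteq> 0" by (rule G_det)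
  qed
  then show ?thesis unfolding coef_def[abs_def] by simp
qed

end


lemma schwarz_vec:
  fixes F :: "real^'n \<Rightarrow> real^'m"
  assumes opU: "open U" and sF: "sm U F" and u: "u \<in> U"
  shows "pd (pd F i) j u = pd (pd F j) i u"
proof -
  have c: "pd (pd F i) j u $ m = pd (pd (\<lambda>v. F v $ m) i) j u" for i j m
  proof -
    have "pd (pd F i) j u $ m = pd (\<lambda>v. pd F i v $ m) j u"
      using pd_nth[OF sm_diff_at[OF opU sm_pd[OF sF] u]] by simp
    also have "\<dots> = pd (pd (\<lambda>v. F v $ m) i) j u"
      by (rule pd_cong[OF opU u]) (use pd_nth[OF sm_diff_at[OF opU sF]] in auto)
    finally show ?thesis .
  qed
  have "pd (pd (\<lambda>v. F v $ m) i) j u = pd (pd (\<lambda>v. F v $ m) j) i u" for m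
  proof -
    have s: "sm U (\<lambda>v. F v $ m)" by (rule sm_nth[OF opU sF])
    show ?thesis
      by (rule schwarz[OF opU u sm_diff[OF s] sm_diff_at[OF opU sm_pd[OF s] u] sm_diff_at[OF opU sm_pd[OF s] u]])
  qed
  then show ?thesis using c by (simp add: vec_eq_iff)
qed

context cah begin

definition Wf :: "'n \<Rightarrow> 'n \<Rightarrow> real^'n \<Rightarrow> real^'m" where "Wf i j = pd (pd x j) i"
definition cf :: "'n \<Rightarrow> 'n \<Rightarrow> 'n option \<Rightarrow> real^'n \<Rightarrow> real" where "cf i j a = coef (Wf i j) a"

lemma eps2: "\<epsilon> * \<epsilon> = 1" using eps by auto

lemma sm_Wf: "sm U (Wf i j)" unfolding Wf_def by (intro sm_pd smx)
lemma sm_cf: "sm U (cf i j a)" unfolding cf_def by (intro sm_coef sm_Wf)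

lemma Wf_sym: "u \<in> U \<Longrightarrow> Wf i j u = Wf j i u"
  unfolding Wf_def by (rule schwarz_vec[OF opU smx])

lemma cf_sym: "u \<in> U \<Longrightarrow> cf i j a u = cf j i a u"
  unfolding cf_def coef_def by (simp only: Wf_sym[of u i j])

lemma gauss_eq:
  assumes u: "u \<in> U"
  shows "gauss_coeffs x \<epsilon> u i j = (\<lambda>k. cf i j (Some k) u, - \<epsilon> * cf i j None u)"
proof -
  have rep: "Wf i j u = (\<Sum>a\<in>UNIV. cf i j a u *\<^sub>R bvec u a)"
    unfolding cf_def by (rule coef_works[OF u])
  have P: "pd (pd x j) i u = (\<Sum>k\<in>UNIV. cf i j (Some k) u *\<^sub>R pd x k u) + (- \<epsilon> * cf i j None u) *\<^sub>R (- \<epsilon> *\<^sub>R x u)"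
    using rep eps2 by (simp add: Wf_def sum_option bvec_def add.commute)
  show ?thesis
    unfolding gauss_coeffs_def
  proof (rule the_equality)
    show "case (\<lambda>k. cf i j (Some k) u, - \<epsilon> * cf i j None u) of (g, c) \<Rightarrow> pd (pd x j) i u =
        (\<Sum>k\<in>UNIV. g k *\<^sub>R pd x k u) + c *\<^sub>R - \<epsilon> *\<^sub>R x u" using P by simp
  next
    fix y assume "case y of (g, c) \<Rightarrow> pd (pd x j) i u = (\<Sum>k\<in>UNIV. g k *\<^sub>R pd x k u) + c *\<^sub>R - \<epsilon> *\<^sub>R x u"
    then obtain g c where y: "y = (g, c)" and e: "pd (pd x j) i u = (\<Sum>k\<in>UNIV. g k *\<^sub>R pd x k u) + c *\<^sub>R - \<epsilon> *\<^sub>R x u"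
      by (cases y) auto
    define c' where "c' = (\<lambda>a. case a of None \<Rightarrow> - \<epsilon> * c | Some k \<Rightarrow> g k)"
    have "Wf i j u = (\<Sum>a\<in>UNIV. c' a *\<^sub>R bvec u a)"
      using e by (simp add: Wf_def sum_option bvec_def c'_def add.commute)
    then have "c' a = cf i j a u" for a unfolding cf_def by (rule coef_unique[OF u])
    then have "g k = cf i j (Some k) u" "- \<epsilon> * c = cf i j None u" for k
      using c'_def by (metis option.simps(5), metis option.simps(4))
    then have "c = - \<epsilon> * cf i j None u" using eps by auto
    then show "y = (\<lambda>k. cf i j (Some k) u, - \<epsilon> * cf i j None u)"
      using y \<open>\<And>k. g k = cf i j (Some k) u\<close> by auto
  qed
qed

lemma Gam_eq: "u \<in> U \<Longrightarrow> Gam x \<epsilon> u k i j = cf i j (Some k) u"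
  unfolding Gam_def using gauss_eq by simp

lemma hmet_eq: "u \<in> U \<Longrightarrow> hmet x \<epsilon> u i j = - \<epsilon> * cf i j None u"
  unfolding hmet_def using gauss_eq by simp

lemma sm_Gam: "sm U (\<lambda>v. Gam x \<epsilon> v k i j)"
  by (rule sm_cong[OF opU _ sm_cf[of i j "Some k"]]) (simp add: Gam_eq)

lemma sm_hmet: "sm U (\<lambda>v. hmet x \<epsilon> v i j)"
  by (rule sm_cong[OF opU _ sm_mult[OF opU sm_const[OF opU, of "- \<epsilon>"] sm_cf[of i j None]]])
     (simp add: hmet_eq)

lemma Gam_sym: "u \<in> U \<Longrightarrow> Gam x \<epsilon> u k i j = Gam x \<epsilon> u k j i"
  using Gam_eq cf_sym by simp

lemma hmet_sym: "u \<in> U \<Longrightarrow> hmet x \<epsilon> u i j = hmet x \<epsilon> u j i"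
  using hmet_eq cf_sym by simp

end


context cah begin

lemma diff_cf: "u \<in> U \<Longrightarrow> cf i j a differentiable (at u)" by (rule sm_diff_at[OF opU sm_cf])
lemma diff_bvec: "u \<in> U \<Longrightarrow> (\<lambda>v. bvec v a) differentiable (at u)" by (rule sm_diff_at[OF opU sm_bvec])

lemma pd_bvec:
  assumes u: "u \<in> U"
  shows "pd (\<lambda>v. bvec v a) l u = (case a of None \<Rightarrow> bvec u (Some l) | Some k \<Rightarrow> (\<Sum>b\<in>UNIV. cf l k b u *\<^sub>R bvec u b))"
proof (cases a)
  case None then show ?thesis by (simp add: bvec_def)
next
  case (Some k)
  have "pd (\<lambda>v. bvec v a) l u = Wf l k u" using Some by (simp add: bvec_def Wf_def)
  also have "\<dots> = (\<Sum>b\<in>UNIV. cf l k b u *\<^sub>R bvec u b)" unfolding cf_def by (rule coef_works[OF u])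
  finally show ?thesis using Some by simp
qed

definition dco :: "'n \<Rightarrow> 'n \<Rightarrow> 'n \<Rightarrow> 'n option \<Rightarrow> real^'n \<Rightarrow> real" where
  "dco i j l b u = pd (cf i j b) l u + (if b = Some l then cf i j None u else 0)
      + (\<Sum>k\<in>UNIV. cf i j (Some k) u * cf l k b u)"

lemma delta_aux: "c *\<^sub>R bvec u (Some l) = (\<Sum>b\<in>UNIV. (if b = Some l then c else 0) *\<^sub>R bvec u b)"
proof -
  have "(\<Sum>b\<in>UNIV. (if b = Some l then c else 0) *\<^sub>R bvec u b) = (\<Sum>b\<in>UNIV. if b = Some l then c *\<^sub>R bvec u b else 0)"
    by (rule sum.cong) auto
  also have "\<dots> = c *\<^sub>R bvec u (Some l)" by (subst sum.delta) auto
  finally show ?thesis by simp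
qed

lemma swap_aux: "(\<Sum>k\<in>UNIV. c k *\<^sub>R (\<Sum>b\<in>UNIV. f k b *\<^sub>R bvec u b))
     = (\<Sum>b\<in>UNIV. (\<Sum>k\<in>UNIV. c k * f k b) *\<^sub>R bvec u b)"
proof -
  have "(\<Sum>k\<in>UNIV. c k *\<^sub>R (\<Sum>b\<in>UNIV. f k b *\<^sub>R bvec u b)) = (\<Sum>k\<in>UNIV. \<Sum>b\<in>UNIV. (c k * f k b) *\<^sub>R bvec u b)"
    by (simp add: scaleR_sum_right)
  also have "\<dots> = (\<Sum>b\<in>UNIV. \<Sum>k\<in>UNIV. (c k * f k b) *\<^sub>R bvec u b)" by (rule sum.swap)
  also have "\<dots> = (\<Sum>b\<in>UNIV. (\<Sum>k\<in>UNIV. c k * f k b) *\<^sub>R bvec u b)" by (simp add: scaleR_sum_left)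
  finally show ?thesis .
qed

lemma deriv_rep:
  assumes u: "u \<in> U"
  shows "pd (Wf i j) l u = (\<Sum>b\<in>UNIV. dco i j l b u *\<^sub>R bvec u b)"
proof -
  have "pd (Wf i j) l u = pd (\<lambda>v. \<Sum>a\<in>UNIV. cf i j a v *\<^sub>R bvec v a) l u"
    by (rule pd_cong[OF opU u]) (simp add: cf_def coef_works)
  also have "\<dots> = (\<Sum>a\<in>UNIV. pd (\<lambda>v. cf i j a v *\<^sub>R bvec v a) l u)"
  proof (rule pd_sum)
    fix a show "(\<lambda>v. cf i j a v *\<^sub>R bvec v a) differentiable (at u)"
      by (rule differentiable_scaleR[OF diff_cf[OF u] diff_bvec[OF u]])
  qed simp
  also have "\<dots> = (\<Sum>a\<in>UNIV. pd (cf i j a) l u *\<^sub>R bvec u a + cf i j a u *\<^sub>R pd (\<lambda>v. bvec v a) l u)"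
    by (rule sum.cong[OF refl], rule pd_scaleR[OF diff_cf[OF u] diff_bvec[OF u]])
  also have "\<dots> = (\<Sum>a\<in>UNIV. pd (cf i j a) l u *\<^sub>R bvec u a) + (\<Sum>a\<in>UNIV. cf i j a u *\<^sub>R pd (\<lambda>v. bvec v a) l u)"
    by (rule sum.distrib)
  also have "(\<Sum>a\<in>UNIV. cf i j a u *\<^sub>R pd (\<lambda>v. bvec v a) l u)
     = cf i j None u *\<^sub>R bvec u (Some l) + (\<Sum>k\<in>UNIV. cf i j (Some k) u *\<^sub>R (\<Sum>b\<in>UNIV. cf l k b u *\<^sub>R bvec u b))"
    by (simp only: sum_option pd_bvec[OF u] option.simps)
  also have "\<dots> = (\<Sum>b\<in>UNIV. (if b = Some l then cf i j None u else 0) *\<^sub>R bvec u b)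
       + (\<Sum>b\<in>UNIV. (\<Sum>k\<in>UNIV. cf i j (Some k) u * cf l k b u) *\<^sub>R bvec u b)"
    by (simp only: delta_aux swap_aux)
  finally show ?thesis unfolding dco_def by (simp only: sum.distrib[symmetric] scaleR_add_left[symmetric] add.assoc)
qed

lemma codazzi_cf:
  assumes u: "u \<in> U"
  shows "pd (cf i j None) l u + (\<Sum>k\<in>UNIV. cf i j (Some k) u * cf l k None u)
       = pd (cf l j None) i u + (\<Sum>k\<in>UNIV. cf l j (Some k) u * cf i k None u)"
proof -
  have e: "pd (Wf i j) l u = pd (Wf l j) i u"
    unfolding Wf_def by (rule schwarz_vec[OF opU sm_pd[OF smx] u])
  have "pd (cf i j None) l u + (\<Sum>k\<in>UNIV. cf i j (Some k) u * cf l k None u) = coef (pd (Wf i j) l) None u"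
    using coef_unique[where W="pd (Wf i j) l" and c="\<lambda>b. dco i j l b u" and a=None, OF u deriv_rep[OF u]] by (simp add: dco_def)
  also have "\<dots> = coef (pd (Wf l j) i) None u" unfolding coef_def e ..
  also have "\<dots> = pd (cf l j None) i u + (\<Sum>k\<in>UNIV. cf l j (Some k) u * cf i k None u)"
    using coef_unique[where W="pd (Wf l j) i" and c="\<lambda>b. dco l j i b u" and a=None, OF u deriv_rep[OF u]] by (simp add: dco_def)
  finally show ?thesis .
qed

definition dh :: "'n \<Rightarrow> 'n \<Rightarrow> 'n \<Rightarrow> real^'n \<Rightarrow> real" where
  "dh l i j u = pd (\<lambda>v. hmet x \<epsilon> v i j) l u"

lemma cf_None: assumes u: "u \<in> U" shows "cf i j None u = - \<epsilon> * hmet x \<epsilon> u i j"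
proof -
  have "- \<epsilon> * hmet x \<epsilon> u i j = (\<epsilon> * \<epsilon>) * cf i j None u" by (simp add: hmet_eq[OF u])
  then show ?thesis using eps2 by simp
qed

lemma pd_cf_None:
  assumes u: "u \<in> U"
  shows "pd (cf i j None) l u = - \<epsilon> * dh l i j u"
proof -
  have "pd (cf i j None) l u = pd (\<lambda>v. (- \<epsilon>) * hmet x \<epsilon> v i j) l u"
    by (rule pd_cong[OF opU u]) (simp add: cf_None)
  also have "\<dots> = - \<epsilon> * dh l i j u"
    using pd_mult[OF differentiable_const sm_diff_at[OF opU sm_hmet u], of "- \<epsilon>"]
    by (simp add: dh_def pd_const)
  finally show ?thesis .
qed

lemma sum_const_factor: "(\<Sum>k\<in>S. a k * (c * b k)) = c * (\<Sum>k\<in>S. a k * b k)" for c :: real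
  by (simp add: sum_distrib_left mult.left_commute)

lemma codazzi:
  assumes u: "u \<in> U"
  shows "dh l i j u + (\<Sum>k\<in>UNIV. Gam x \<epsilon> u k i j * hmet x \<epsilon> u l k)
       = dh i l j u + (\<Sum>k\<in>UNIV. Gam x \<epsilon> u k l j * hmet x \<epsilon> u i k)"
proof -
  have "- \<epsilon> * dh l i j u + - \<epsilon> * (\<Sum>k\<in>UNIV. Gam x \<epsilon> u k i j * hmet x \<epsilon> u l k)
       = - \<epsilon> * dh i l j u + - \<epsilon> * (\<Sum>k\<in>UNIV. Gam x \<epsilon> u k l j * hmet x \<epsilon> u i k)"
    using codazzi_cf[OF u, of i j l]
    by (simp only: pd_cf_None[OF u] cf_None[OF u] Gam_eq[OF u, symmetric] sum_const_factor)
  then have "- \<epsilon> * (dh l i j u + (\<Sum>k\<in>UNIV. Gam x \<epsilon> u k i j * hmet x \<epsilon> u l k))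
       = - \<epsilon> * (dh i l j u + (\<Sum>k\<in>UNIV. Gam x \<epsilon> u k l j * hmet x \<epsilon> u i k))"
    by (simp only: distrib_left)
  then show ?thesis using eps by auto
qed

end


context cah begin

definition hmat :: "real^'n \<Rightarrow> real^'n^'n" where "hmat u = (\<chi> a b. hmet x \<epsilon> u a b)"

lemma hmat_nth[simp]: "hmat u $ a $ b = hmet x \<epsilon> u a b" by (simp add: hmat_def)

lemma hmat_det: assumes u: "u \<in> U" shows "det (hmat u) \<noteq> 0"
proof (rule det_nz_of_ker)
  fix c assume z: "hmat u *v c = 0"
  have "(\<Sum>i\<in>UNIV. \<Sum>j\<in>UNIV. hmet x \<epsilon> u i j * c$i * c$j) = (\<Sum>i\<in>UNIV. c$i * (hmat u *v c)$i)"
    by (simp add: hmat_def matrix_vector_mult_def sum_distrib_left algebra_simps)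
  also have "\<dots> = 0" using z by simp
  finally show "c = 0" using hp[OF u] unfolding hpos_def by force
qed

lemma hinv_inv: assumes u: "u \<in> U"
  shows "(\<Sum>k\<in>UNIV. hmet x \<epsilon> u i k * hinv x \<epsilon> u k j) = kdelta i j"
    "(\<Sum>k\<in>UNIV. hinv x \<epsilon> u i k * hmet x \<epsilon> u k j) = kdelta i j"
proof -
  have inv: "invertible (hmat u)" using hmat_det[OF u] invertible_det_nz by blast
  note m = matrix_inv_props[OF inv]
  show "(\<Sum>k\<in>UNIV. hmet x \<epsilon> u i k * hinv x \<epsilon> u k j) = kdelta i j"
    using arg_cong[OF m(1), of "\<lambda>M. M $ i $ j"]
    by (simp add: matrix_matrix_mult_def mat_def hinv_def hmat_def kdelta_def)
  show "(\<Sum>k\<in>UNIV. hinv x \<epsilon> u i k * hmet x \<epsilon> u k j) = kdelta i j"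
    using arg_cong[OF m(2), of "\<lambda>M. M $ i $ j"]
    by (simp add: matrix_matrix_mult_def mat_def hinv_def hmat_def kdelta_def)
qed

lemma sm_hinv: "sm U (\<lambda>v. hinv x \<epsilon> v i j)"
proof -
  have "sm U (\<lambda>v. det (\<chi> a b. if b = i then (if a = j then 1 else 0) else hmet x \<epsilon> v a b) / det (hmat v))"
  proof (rule sm_divide[OF opU])
    show "sm U (\<lambda>v. det (\<chi> a b. if b = i then (if a = j then 1 else 0) else hmet x \<epsilon> v a b))"
      apply (rule sm_det[OF opU])
      subgoal for a b by (cases "b = i") (auto intro!: sm_const[OF opU] sm_hmet)
      done
    show "sm U (\<lambda>v. det (hmat v))" unfolding hmat_def by (rule sm_det[OF opU]) (rule sm_hmet)
    show "\<And>v. v \<in> U \<Longrightarrow> det (hmat v) \<noteq> 0" by (rule hmat_det)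
  qed
  moreover have "hinv x \<epsilon> v i j = det (\<chi> a b. if b = i then (if a = j then 1 else 0) else hmet x \<epsilon> v a b) / det (hmat v)"
    if "v \<in> U" for v
  proof -
    have "hinv x \<epsilon> v i j = matrix_inv (hmat v) $ i $ j" by (simp add: hinv_def hmat_def)
    also have "\<dots> = det (\<chi> a b. if b = i then (if a = j then 1 else 0) else hmat v $ a $ b) / det (hmat v)"
      by (rule matrix_inv_cramer[OF hmat_det[OF that]])
    also have "(\<chi> a b. if b = i then (if a = j then 1 else 0) else hmat v $ a $ b)
       = (\<chi> a b. if b = i then (if a = j then 1 else 0) else hmet x \<epsilon> v a b)"
      by (simp add: vec_eq_iff)
    finally show ?thesis .
  qed
  ultimately show ?thesis using sm_cong[OF opU] by (metis (no_types, lifting))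
qed

lemmas sm_intros = sm_sum[OF opU] sm_mult[OF opU] sm_add[OF opU] sm_diff'[OF opU] sm_const[OF opU]
  sm_hinv sm_hmet sm_Gam sm_pd

lemma sm_chr: "sm U (\<lambda>v. chr x \<epsilon> v k i j)"
  unfolding chr_def by (intro sm_intros finite_UNIV; simp?)

lemma sm_Kc: "sm U (\<lambda>v. Kc x \<epsilon> v k i j)"
  unfolding Kc_def by (intro sm_intros sm_chr)

lemma sm_Tc: "sm U (\<lambda>v. Tc x \<epsilon> v j)"
  unfolding Tc_def by (intro sm_intros sm_Kc finite_UNIV; simp?)

lemma sm_Tlow: "sm U (\<lambda>v. Tlow x \<epsilon> v j)"
  unfolding Tlow_def by (intro sm_intros sm_Tc finite_UNIV; simp?)

lemma sm_Ktil: "sm U (\<lambda>v. Ktil x \<epsilon> v k i j)"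
  unfolding Ktil_def by (intro sm_intros sm_Kc sm_Tc sm_Tlow finite_UNIV; simp?)

end


lemma kdelta_sum1[simp]: "(\<Sum>l\<in>UNIV. kdelta (n::'a::finite) l * f l) = (f n :: real)"
proof -
  have "(\<Sum>l\<in>UNIV. kdelta n l * f l) = (\<Sum>l\<in>UNIV. if n = l then f l else 0)"
    by (rule sum.cong) (auto simp: kdelta_def)
  then show ?thesis by (simp add: sum.delta')
qed
lemma kdelta_sum2[simp]: "(\<Sum>l\<in>UNIV. f l * kdelta l (n::'a::finite)) = (f n :: real)"
  using kdelta_sum1[of n f] by (simp add: kdelta_def mult.commute eq_commute)
lemma kdelta_sum3[simp]: "(\<Sum>l\<in>UNIV. kdelta l (n::'a::finite) * f l) = (f n :: real)"
  using kdelta_sum1[of n f] by (simp add: kdelta_def eq_commute)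
lemma kdelta_sum4[simp]: "(\<Sum>l\<in>UNIV. f l * kdelta (n::'a::finite) l) = (f n :: real)"
  using kdelta_sum1[of n f] by (simp add: mult.commute)
lemma kdelta_sym: "kdelta a b = kdelta b a" by (simp add: kdelta_def)

context cah begin

lemma dh_sym: "u \<in> U \<Longrightarrow> dh l i j u = dh l j i u"
  unfolding dh_def by (rule pd_cong[OF opU]) (auto intro: hmet_sym)

definition S3 :: "real^'n \<Rightarrow> 'n \<Rightarrow> 'n \<Rightarrow> 'n \<Rightarrow> real" where
  "S3 u i j l = dh i j l u + dh j i l u - dh l i j u"

lemma chr_unfold: "chr x \<epsilon> u k i j = 1/2 * (\<Sum>l\<in>UNIV. hinv x \<epsilon> u k l * S3 u i j l)"
  unfolding chr_def S3_def dh_def ..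

lemma chr_low:
  assumes u: "u \<in> U"
  shows "(\<Sum>k\<in>UNIV. chr x \<epsilon> u k i j * hmet x \<epsilon> u k n) = 1/2 * S3 u i j n"
proof -
  have "(\<Sum>k\<in>UNIV. chr x \<epsilon> u k i j * hmet x \<epsilon> u k n)
      = (\<Sum>k\<in>UNIV. \<Sum>l\<in>UNIV. 1/2 * (hmet x \<epsilon> u n k * hinv x \<epsilon> u k l * S3 u i j l))"
    unfolding chr_unfold by (simp add: sum_distrib_left sum_distrib_right hmet_sym[OF u, of _ n] mult_ac)
  also have "\<dots> = (\<Sum>l\<in>UNIV. \<Sum>k\<in>UNIV. 1/2 * (hmet x \<epsilon> u n k * hinv x \<epsilon> u k l * S3 u i j l))"
    by (rule sum.swap)
  also have "\<dots> = (\<Sum>l\<in>UNIV. 1/2 * ((\<Sum>k\<in>UNIV. hmet x \<epsilon> u n k * hinv x \<epsilon> u k l) * S3 u i j l))"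
    by (simp add: sum_distrib_left sum_distrib_right)
  also have "\<dots> = (\<Sum>l\<in>UNIV. 1/2 * (kdelta n l * S3 u i j l))"
    by (simp add: hinv_inv[OF u])
  also have "\<dots> = 1/2 * S3 u i j n" by (simp only: sum_distrib_left[symmetric] kdelta_sum1)
  finally show ?thesis .
qed

lemma chr_sym: "u \<in> U \<Longrightarrow> chr x \<epsilon> u k i j = chr x \<epsilon> u k j i"
  unfolding chr_unfold S3_def by (simp add: dh_sym add.commute)

lemma metric_compat:
  assumes u: "u \<in> U"
  shows "dh l a b u = (\<Sum>q\<in>UNIV. chr x \<epsilon> u q l a * hmet x \<epsilon> u q b) + (\<Sum>q\<in>UNIV. chr x \<epsilon> u q l b * hmet x \<epsilon> u a q)"
proof -
  have "(\<Sum>q\<in>UNIV. chr x \<epsilon> u q l b * hmet x \<epsilon> u a q) = (\<Sum>q\<in>UNIV. chr x \<epsilon> u q l b * hmet x \<epsilon> u q a)"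
    by (simp add: hmet_sym[OF u, of a])
  then show ?thesis using chr_low[OF u, of l a b] chr_low[OF u, of l b a] dh_sym[OF u, of l a b]
    unfolding S3_def by simp
qed

definition Klow :: "real^'n \<Rightarrow> 'n \<Rightarrow> 'n \<Rightarrow> 'n \<Rightarrow> real" where
  "Klow u n i j = (\<Sum>k\<in>UNIV. Kc x \<epsilon> u k i j * hmet x \<epsilon> u k n)"

definition Glow :: "real^'n \<Rightarrow> 'n \<Rightarrow> 'n \<Rightarrow> 'n \<Rightarrow> real" where
  "Glow u i j n = (\<Sum>k\<in>UNIV. Gam x \<epsilon> u k i j * hmet x \<epsilon> u k n)"

lemma Klow_expr:
  assumes u: "u \<in> U"
  shows "Klow u n i j = Glow u i j n - 1/2 * S3 u i j n"
  unfolding Klow_def Glow_def Kc_def using chr_low[OF u, of i j n]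
  by (simp add: left_diff_distrib sum_subtractf)

lemma codazzi_low:
  assumes u: "u \<in> U"
  shows "dh l i j u + Glow u i j l = dh i l j u + Glow u l j i"
proof -
  have "Glow u i j l = (\<Sum>k\<in>UNIV. Gam x \<epsilon> u k i j * hmet x \<epsilon> u l k)" "Glow u l j i = (\<Sum>k\<in>UNIV. Gam x \<epsilon> u k l j * hmet x \<epsilon> u i k)"
    unfolding Glow_def by (simp_all add: hmet_sym[OF u, of l] hmet_sym[OF u, of i])
  then show ?thesis using codazzi[OF u, of l i j] by simp
qed

lemma Glow_sym: "u \<in> U \<Longrightarrow> Glow u i j n = Glow u j i n"
  unfolding Glow_def by (simp add: Gam_sym)

lemma Klow_sym1:
  assumes u: "u \<in> U" shows "Klow u n i j = Klow u n j i"
  unfolding Klow_def Kc_def by (simp add: Gam_sym[OF u, of _ i j] chr_sym[OF u, of _ i j])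

lemma Klow_sym2:
  assumes u: "u \<in> U" shows "Klow u n i j = Klow u i n j"
proof -
  note e1 = Klow_expr[OF u, of n i j, unfolded S3_def right_diff_distrib distrib_left] and e2 = Klow_expr[OF u, of i n j, unfolded S3_def right_diff_distrib distrib_left]
  note c1 = codazzi_low[OF u, of i j n] codazzi_low[OF u, of j n i] codazzi_low[OF u, of n i j]
    codazzi_low[OF u, of n j i] codazzi_low[OF u, of j i n] codazzi_low[OF u, of i n j]
  note s1 = dh_sym[OF u, of i j n] dh_sym[OF u, of j i n] dh_sym[OF u, of n i j]
    dh_sym[OF u, of n j i] dh_sym[OF u, of i n j] dh_sym[OF u, of j n i]
  note g1 = Glow_sym[OF u, of i j n] Glow_sym[OF u, of j n i] Glow_sym[OF u, of n i j]
    Glow_sym[OF u, of n j i] Glow_sym[OF u, of i n j] Glow_sym[OF u, of j i n]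
  show ?thesis using e1 e2 c1 s1 g1 by linarith
qed

lemma trace_K:
  assumes u: "u \<in> U"
  shows "(\<Sum>k\<in>UNIV. Kc x \<epsilon> u k i k) = real CARD('n) * Tlow x \<epsilon> u i"
proof -
  define tr where "tr a = (\<Sum>k\<in>UNIV. Kc x \<epsilon> u k a k)" for a
  have "Tlow x \<epsilon> u i = (\<Sum>m\<in>UNIV. \<Sum>a\<in>UNIV. (1 / real CARD('n)) * (hmet x \<epsilon> u i m * hinv x \<epsilon> u m a * tr a))"
    unfolding Tlow_def Tc_def tr_def by (simp add: sum_distrib_left mult_ac)
  also have "\<dots> = (\<Sum>a\<in>UNIV. \<Sum>m\<in>UNIV. (1 / real CARD('n)) * (hmet x \<epsilon> u i m * hinv x \<epsilon> u m a * tr a))"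
    by (rule sum.swap)
  also have "\<dots> = (\<Sum>a\<in>UNIV. (1 / real CARD('n)) * ((\<Sum>m\<in>UNIV. hmet x \<epsilon> u i m * hinv x \<epsilon> u m a) * tr a))"
    by (simp add: sum_distrib_left sum_distrib_right)
  also have "\<dots> = (1 / real CARD('n)) * tr i"
    by (simp only: hinv_inv[OF u] sum_distrib_left[symmetric] kdelta_sum1)
  finally show ?thesis unfolding tr_def by simp
qed

end


context cah begin

lemma dKc: "u \<in> U \<Longrightarrow> (\<lambda>v. Kc x \<epsilon> v k i j) differentiable (at u)" by (rule sm_diff_at[OF opU sm_Kc])
lemma dhm: "u \<in> U \<Longrightarrow> (\<lambda>v. hmet x \<epsilon> v i j) differentiable (at u)" by (rule sm_diff_at[OF opU sm_hmet])
lemma dTc: "u \<in> U \<Longrightarrow> (\<lambda>v. Tc x \<epsilon> v j) differentiable (at u)" by (rule sm_diff_at[OF opU sm_Tc])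
lemma dTlow: "u \<in> U \<Longrightarrow> (\<lambda>v. Tlow x \<epsilon> v j) differentiable (at u)" by (rule sm_diff_at[OF opU sm_Tlow])

definition LK :: "real^'n \<Rightarrow> 'n \<Rightarrow> 'n \<Rightarrow> 'n \<Rightarrow> 'n \<Rightarrow> real" where
  "LK u l n a b = (\<Sum>m\<in>UNIV. cov12 x \<epsilon> (Kc x \<epsilon>) u l m a b * hmet x \<epsilon> u m n)"

lemma pd_Klow:
  assumes u: "u \<in> U"
  shows "pd (\<lambda>v. Klow v n a b) l u = (\<Sum>m\<in>UNIV. pd (\<lambda>v. Kc x \<epsilon> v m a b) l u * hmet x \<epsilon> u m n)
     + (\<Sum>m\<in>UNIV. Kc x \<epsilon> u m a b * dh l m n u)"
proof -
  have "pd (\<lambda>v. Klow v n a b) l u = (\<Sum>m\<in>UNIV. pd (\<lambda>v. Kc x \<epsilon> v m a b * hmet x \<epsilon> v m n) l u)"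
    unfolding Klow_def by (rule pd_sum) (auto intro: differentiable_mult dKc[OF u] dhm[OF u])
  also have "\<dots> = (\<Sum>m\<in>UNIV. pd (\<lambda>v. Kc x \<epsilon> v m a b) l u * hmet x \<epsilon> u m n + Kc x \<epsilon> u m a b * dh l m n u)"
    by (rule sum.cong[OF refl]) (simp add: pd_mult[OF dKc[OF u] dhm[OF u]] dh_def)
  finally show ?thesis by (simp add: sum.distrib)
qed

lemma LK_expr:
  assumes u: "u \<in> U"
  shows "LK u l n a b = pd (\<lambda>v. Klow v n a b) l u
     - (\<Sum>q\<in>UNIV. chr x \<epsilon> u q l a * Klow u n q b) - (\<Sum>q\<in>UNIV. chr x \<epsilon> u q l b * Klow u n a q)
     - (\<Sum>q\<in>UNIV. chr x \<epsilon> u q l n * Klow u q a b)"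
proof -
  let ?K = "Kc x \<epsilon> u" and ?h = "hmet x \<epsilon> u" and ?c = "chr x \<epsilon> u"
  have T2: "(\<Sum>m\<in>UNIV. (\<Sum>q\<in>UNIV. ?c m l q * ?K q a b) * ?h m n)
      = (\<Sum>m\<in>UNIV. \<Sum>q\<in>UNIV. ?K m a b * ?c q l m * ?h q n)"
    by (subst sum.swap) (simp add: sum_distrib_right sum_distrib_left mult_ac)
  have T3: "(\<Sum>m\<in>UNIV. (\<Sum>q\<in>UNIV. ?c q l a * ?K m q b) * ?h m n) = (\<Sum>q\<in>UNIV. ?c q l a * Klow u n q b)"
  proof -
    have "(\<Sum>m\<in>UNIV. (\<Sum>q\<in>UNIV. ?c q l a * ?K m q b) * ?h m n) = (\<Sum>m\<in>UNIV. \<Sum>q\<in>UNIV. ?c q l a * (?K m q b * ?h m n))"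
      by (simp add: sum_distrib_right sum_distrib_left mult_ac)
    also have "\<dots> = (\<Sum>q\<in>UNIV. \<Sum>m\<in>UNIV. ?c q l a * (?K m q b * ?h m n))" by (rule sum.swap)
    finally show ?thesis by (simp add: Klow_def sum_distrib_left)
  qed
  have T4: "(\<Sum>m\<in>UNIV. (\<Sum>q\<in>UNIV. ?c q l b * ?K m a q) * ?h m n) = (\<Sum>q\<in>UNIV. ?c q l b * Klow u n a q)"
  proof -
    have "(\<Sum>m\<in>UNIV. (\<Sum>q\<in>UNIV. ?c q l b * ?K m a q) * ?h m n) = (\<Sum>m\<in>UNIV. \<Sum>q\<in>UNIV. ?c q l b * (?K m a q * ?h m n))"
      by (simp add: sum_distrib_right sum_distrib_left mult_ac)
    also have "\<dots> = (\<Sum>q\<in>UNIV. \<Sum>m\<in>UNIV. ?c q l b * (?K m a q * ?h m n))" by (rule sum.swap)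
    finally show ?thesis by (simp add: Klow_def sum_distrib_left)
  qed
  have D: "(\<Sum>m\<in>UNIV. ?K m a b * dh l m n u)
      = (\<Sum>m\<in>UNIV. \<Sum>q\<in>UNIV. ?K m a b * ?c q l m * ?h q n) + (\<Sum>q\<in>UNIV. ?c q l n * Klow u q a b)"
  proof -
    have "(\<Sum>m\<in>UNIV. ?K m a b * dh l m n u)
       = (\<Sum>m\<in>UNIV. (\<Sum>q\<in>UNIV. ?K m a b * ?c q l m * ?h q n) + (\<Sum>q\<in>UNIV. ?K m a b * ?c q l n * ?h m q))"
      by (rule sum.cong[OF refl]) (simp add: metric_compat[OF u, of l _ n] distrib_left sum_distrib_left mult_ac)
    also have "\<dots> = (\<Sum>m\<in>UNIV. \<Sum>q\<in>UNIV. ?K m a b * ?c q l m * ?h q n) + (\<Sum>m\<in>UNIV. \<Sum>q\<in>UNIV. ?K m a b * ?c q l n * ?h m q)"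
      by (rule sum.distrib)
    also have "(\<Sum>m\<in>UNIV. \<Sum>q\<in>UNIV. ?K m a b * ?c q l n * ?h m q) = (\<Sum>q\<in>UNIV. ?c q l n * Klow u q a b)"
    proof -
      have "(\<Sum>m\<in>UNIV. \<Sum>q\<in>UNIV. ?K m a b * ?c q l n * ?h m q) = (\<Sum>q\<in>UNIV. \<Sum>m\<in>UNIV. ?c q l n * (?K m a b * ?h m q))"
        by (subst sum.swap) (simp add: mult_ac)
      then show ?thesis by (simp add: Klow_def sum_distrib_left)
    qed
    finally show ?thesis .
  qed
  have "LK u l n a b = (\<Sum>m\<in>UNIV. pd (\<lambda>v. Kc x \<epsilon> v m a b) l u * ?h m n)
      + (\<Sum>m\<in>UNIV. (\<Sum>q\<in>UNIV. ?c m l q * ?K q a b) * ?h m n)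
      - (\<Sum>m\<in>UNIV. (\<Sum>q\<in>UNIV. ?c q l a * ?K m q b) * ?h m n)
      - (\<Sum>m\<in>UNIV. (\<Sum>q\<in>UNIV. ?c q l b * ?K m a q) * ?h m n)"
    unfolding LK_def cov12_def by (simp add: algebra_simps sum.distrib sum_subtractf)
  then show ?thesis using T2 T3 T4 D pd_Klow[OF u, of n a b l] by simp
qed

end


context cah begin

lemma LK_sym1:
  assumes u: "u \<in> U" shows "LK u l n a b = LK u l n b a"
proof -
  have "pd (\<lambda>v. Klow v n a b) l u = pd (\<lambda>v. Klow v n b a) l u"
    by (rule pd_cong[OF opU u]) (rule Klow_sym1)
  moreover have "Klow u n q a = Klow u n a q" "Klow u n b q = Klow u n q b" "Klow u q b a = Klow u q a b" for q
    using Klow_sym1[OF u] by auto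
  ultimately show ?thesis unfolding LK_expr[OF u] by simp
qed

lemma LK_sym2:
  assumes u: "u \<in> U" shows "LK u l n a b = LK u l a n b"
proof -
  have "pd (\<lambda>v. Klow v n a b) l u = pd (\<lambda>v. Klow v a n b) l u"
    by (rule pd_cong[OF opU u]) (rule Klow_sym2)
  moreover have "Klow u a q b = Klow u q a b" "Klow u a n q = Klow u n a q" "Klow u q n b = Klow u n q b" for q
    using Klow_sym2[OF u] by auto
  ultimately show ?thesis unfolding LK_expr[OF u] by (simp add: algebra_simps)
qed

definition DT :: "real^'n \<Rightarrow> 'n \<Rightarrow> 'n \<Rightarrow> real" where
  "DT u l i = pd (\<lambda>v. Tlow x \<epsilon> v i) l u - (\<Sum>q\<in>UNIV. chr x \<epsilon> u q l i * Tlow x \<epsilon> u q)"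

lemma trace_cov:
  assumes u: "u \<in> U"
  shows "(\<Sum>k\<in>UNIV. cov12 x \<epsilon> (Kc x \<epsilon>) u l k i k) = real CARD('n) * DT u l i"
proof -
  let ?K = "Kc x \<epsilon> u" and ?c = "chr x \<epsilon> u"
  have P: "(\<Sum>k\<in>UNIV. pd (\<lambda>v. Kc x \<epsilon> v k i k) l u) = real CARD('n) * pd (\<lambda>v. Tlow x \<epsilon> v i) l u"
  proof -
    have "(\<Sum>k\<in>UNIV. pd (\<lambda>v. Kc x \<epsilon> v k i k) l u) = pd (\<lambda>v. \<Sum>k\<in>UNIV. Kc x \<epsilon> v k i k) l u"
      by (rule pd_sum[symmetric]) (auto intro: dKc[OF u])
    also have "\<dots> = pd (\<lambda>v. real CARD('n) * Tlow x \<epsilon> v i) l u"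
      by (rule pd_cong[OF opU u]) (rule trace_K)
    also have "\<dots> = real CARD('n) * pd (\<lambda>v. Tlow x \<epsilon> v i) l u"
      using pd_mult[OF differentiable_const dTlow[OF u]] by (simp add: pd_const)
    finally show ?thesis .
  qed
  have Z: "(\<Sum>k\<in>UNIV. \<Sum>m\<in>UNIV. ?c k l m * ?K m i k) = (\<Sum>k\<in>UNIV. \<Sum>m\<in>UNIV. ?c m l k * ?K k i m)"
    by (rule sum.swap)
  have Q: "(\<Sum>k\<in>UNIV. \<Sum>m\<in>UNIV. ?c m l i * ?K k m k) = real CARD('n) * (\<Sum>q\<in>UNIV. ?c q l i * Tlow x \<epsilon> u q)"
  proof -
    have "(\<Sum>k\<in>UNIV. \<Sum>m\<in>UNIV. ?c m l i * ?K k m k) = (\<Sum>m\<in>UNIV. ?c m l i * (\<Sum>k\<in>UNIV. ?K k m k))"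
      by (subst sum.swap) (simp add: sum_distrib_left)
    also have "\<dots> = (\<Sum>m\<in>UNIV. ?c m l i * (real CARD('n) * Tlow x \<epsilon> u m))" by (simp add: trace_K[OF u])
    finally show ?thesis by (simp add: sum_distrib_left mult_ac)
  qed
  have "(\<Sum>k\<in>UNIV. cov12 x \<epsilon> (Kc x \<epsilon>) u l k i k) = (\<Sum>k\<in>UNIV. pd (\<lambda>v. Kc x \<epsilon> v k i k) l u)
     + (\<Sum>k\<in>UNIV. \<Sum>m\<in>UNIV. ?c k l m * ?K m i k) - (\<Sum>k\<in>UNIV. \<Sum>m\<in>UNIV. ?c m l i * ?K k m k)
     - (\<Sum>k\<in>UNIV. \<Sum>m\<in>UNIV. ?c m l k * ?K k i m)"
    unfolding cov12_def by (simp add: sum.distrib sum_subtractf)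
  then show ?thesis using P Z Q by (simp add: DT_def algebra_simps)
qed

lemma DT_low:
  assumes u: "u \<in> U"
  shows "DT u l i = (\<Sum>m\<in>UNIV. hmet x \<epsilon> u i m * covT x \<epsilon> u l m)"
proof -
  let ?h = "hmet x \<epsilon> u" and ?c = "chr x \<epsilon> u" and ?T = "Tc x \<epsilon> u"
  have "pd (\<lambda>v. Tlow x \<epsilon> v i) l u = (\<Sum>m\<in>UNIV. pd (\<lambda>v. hmet x \<epsilon> v i m * Tc x \<epsilon> v m) l u)"
    unfolding Tlow_def by (rule pd_sum) (auto intro: differentiable_mult dhm[OF u] dTc[OF u])
  also have "\<dots> = (\<Sum>m\<in>UNIV. dh l i m u * ?T m + ?h i m * pd (\<lambda>v. Tc x \<epsilon> v m) l u)"
    by (rule sum.cong[OF refl]) (simp add: pd_mult[OF dhm[OF u] dTc[OF u]] dh_def)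
  also have "\<dots> = (\<Sum>m\<in>UNIV. (\<Sum>q\<in>UNIV. ?c q l i * ?h q m * ?T m) + (\<Sum>q\<in>UNIV. ?c q l m * ?h i q * ?T m)
      + ?h i m * pd (\<lambda>v. Tc x \<epsilon> v m) l u)"
    by (rule sum.cong[OF refl]) (simp add: metric_compat[OF u, of l i] distrib_right sum_distrib_right)
  also have "\<dots> = (\<Sum>m\<in>UNIV. \<Sum>q\<in>UNIV. ?c q l i * ?h q m * ?T m) + (\<Sum>m\<in>UNIV. \<Sum>q\<in>UNIV. ?c q l m * ?h i q * ?T m)
      + (\<Sum>m\<in>UNIV. ?h i m * pd (\<lambda>v. Tc x \<epsilon> v m) l u)"
    by (simp add: sum.distrib)
  also have "(\<Sum>m\<in>UNIV. \<Sum>q\<in>UNIV. ?c q l i * ?h q m * ?T m) = (\<Sum>q\<in>UNIV. ?c q l i * Tlow x \<epsilon> u q)"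
  proof -
    have "(\<Sum>m\<in>UNIV. \<Sum>q\<in>UNIV. ?c q l i * ?h q m * ?T m) = (\<Sum>q\<in>UNIV. \<Sum>m\<in>UNIV. ?c q l i * (?h q m * ?T m))"
      by (subst sum.swap) (simp add: mult_ac)
    then show ?thesis by (simp add: Tlow_def sum_distrib_left)
  qed
  also have "(\<Sum>m\<in>UNIV. \<Sum>q\<in>UNIV. ?c q l m * ?h i q * ?T m) = (\<Sum>m\<in>UNIV. \<Sum>q\<in>UNIV. ?h i m * (?c m l q * ?T q))"
    by (subst sum.swap) (simp add: mult_ac)
  finally have "DT u l i = (\<Sum>m\<in>UNIV. \<Sum>q\<in>UNIV. ?h i m * (?c m l q * ?T q)) + (\<Sum>m\<in>UNIV. ?h i m * pd (\<lambda>v. Tc x \<epsilon> v m) l u)"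
    unfolding DT_def by simp
  also have "\<dots> = (\<Sum>m\<in>UNIV. ?h i m * covT x \<epsilon> u l m)"
    unfolding covT_def by (simp add: distrib_left sum.distrib sum_distrib_left add.commute)
  finally show ?thesis .
qed


definition cN :: real where "cN = real CARD('n) / (real CARD('n) + 2)"

lemma Ktil_eq: "Ktil x \<epsilon> v k i j = Kc x \<epsilon> v k i j - cN * (hmet x \<epsilon> v i j * Tc x \<epsilon> v k
    + Tlow x \<epsilon> v i * kdelta k j + Tlow x \<epsilon> v j * kdelta k i)"
  unfolding Ktil_def cN_def ..

lemma kd_a: "(\<Sum>m\<in>UNIV. f m * (B * kdelta m (j::'a::finite))) = B * (f j :: real)"
proof -
  have "(\<Sum>m\<in>UNIV. f m * (B * kdelta m j)) = (\<Sum>m\<in>UNIV. if m = j then B * f j else 0)"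
    by (rule sum.cong) (auto simp: kdelta_def)
  also have "\<dots> = B * f j" by (subst sum.delta) auto
  finally show ?thesis .
qed

lemma kd_b: "(\<Sum>m\<in>UNIV. f m * (B * kdelta (j::'a::finite) m)) = B * (f j :: real)"
  using kd_a[of f B j] by (simp add: kdelta_sym)

lemma cov_Ktil:
  assumes u: "u \<in> U"
  shows "cov12 x \<epsilon> (Ktil x \<epsilon>) u l k i j = cov12 x \<epsilon> (Kc x \<epsilon>) u l k i j
     - cN * (hmet x \<epsilon> u i j * covT x \<epsilon> u l k + DT u l i * kdelta k j + DT u l j * kdelta k i)"
proof -
  let ?h = "hmet x \<epsilon> u" and ?c = "chr x \<epsilon> u" and ?T = "Tc x \<epsilon> u" and ?L = "Tlow x \<epsilon> u" and ?K = "Kc x \<epsilon> u"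
  have dP: "(\<lambda>v. hmet x \<epsilon> v i j * Tc x \<epsilon> v k + Tlow x \<epsilon> v i * kdelta k j + Tlow x \<epsilon> v j * kdelta k i) differentiable (at u)"
    by (intro differentiable_add differentiable_mult dhm[OF u] dTc[OF u] dTlow[OF u] differentiable_const)
  have pdP: "pd (\<lambda>v. hmet x \<epsilon> v i j * Tc x \<epsilon> v k + Tlow x \<epsilon> v i * kdelta k j + Tlow x \<epsilon> v j * kdelta k i) l u
     = dh l i j u * ?T k + ?h i j * pd (\<lambda>v. Tc x \<epsilon> v k) l u + pd (\<lambda>v. Tlow x \<epsilon> v i) l u * kdelta k j
       + pd (\<lambda>v. Tlow x \<epsilon> v j) l u * kdelta k i"
    by (simp add: pd_add pd_mult pd_const differentiable_add differentiable_mult dhm[OF u] dTc[OF u] dTlow[OF u] dh_def)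
  have pdKt: "pd (\<lambda>v. Ktil x \<epsilon> v k i j) l u = pd (\<lambda>v. Kc x \<epsilon> v k i j) l u
     - cN * (dh l i j u * ?T k + ?h i j * pd (\<lambda>v. Tc x \<epsilon> v k) l u + pd (\<lambda>v. Tlow x \<epsilon> v i) l u * kdelta k j
       + pd (\<lambda>v. Tlow x \<epsilon> v j) l u * kdelta k i)"
    unfolding Ktil_eq
    by (simp add: pd_diff pd_mult pd_const dKc[OF u] dP differentiable_mult pdP)
  have S1: "(\<Sum>m\<in>UNIV. ?c k l m * Ktil x \<epsilon> u m i j) = (\<Sum>m\<in>UNIV. ?c k l m * ?K m i j)
     - cN * (?h i j * (\<Sum>m\<in>UNIV. ?c k l m * ?T m) + ?L i * ?c k l j + ?L j * ?c k l i)"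
  proof -
    have "(\<Sum>m\<in>UNIV. ?c k l m * Ktil x \<epsilon> u m i j) = (\<Sum>m\<in>UNIV. ?c k l m * ?K m i j
       - cN * (?h i j * (?c k l m * ?T m) + ?L i * (?c k l m * kdelta m j) + ?L j * (?c k l m * kdelta m i)))"
      by (rule sum.cong[OF refl]) (simp add: Ktil_eq algebra_simps)
    also have "\<dots> = (\<Sum>m\<in>UNIV. ?c k l m * ?K m i j)
     - cN * (?h i j * (\<Sum>m\<in>UNIV. ?c k l m * ?T m) + ?L i * (\<Sum>m\<in>UNIV. ?c k l m * kdelta m j) + ?L j * (\<Sum>m\<in>UNIV. ?c k l m * kdelta m i))"
      by (simp only: sum_subtractf sum.distrib sum_distrib_left[symmetric])
    finally show ?thesis by (simp only: kdelta_sum2)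
  qed
  have S2: "(\<Sum>m\<in>UNIV. ?c m l i * Ktil x \<epsilon> u k m j) = (\<Sum>m\<in>UNIV. ?c m l i * ?K k m j)
     - cN * (?T k * (\<Sum>m\<in>UNIV. ?c m l i * ?h m j) + kdelta k j * (\<Sum>m\<in>UNIV. ?c m l i * ?L m) + ?L j * ?c k l i)"
  proof -
    have "(\<Sum>m\<in>UNIV. ?c m l i * Ktil x \<epsilon> u k m j) = (\<Sum>m\<in>UNIV. ?c m l i * ?K k m j
       - cN * (?T k * (?c m l i * ?h m j) + kdelta k j * (?c m l i * ?L m) + ?L j * (?c m l i * kdelta k m)))"
      by (rule sum.cong[OF refl]) (simp add: Ktil_eq algebra_simps)
    also have "\<dots> = (\<Sum>m\<in>UNIV. ?c m l i * ?K k m j)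
     - cN * (?T k * (\<Sum>m\<in>UNIV. ?c m l i * ?h m j) + kdelta k j * (\<Sum>m\<in>UNIV. ?c m l i * ?L m) + ?L j * (\<Sum>m\<in>UNIV. ?c m l i * kdelta k m))"
      by (simp only: sum_subtractf sum.distrib sum_distrib_left[symmetric])
    finally show ?thesis by (simp only: kdelta_sum4)
  qed
  have S3: "(\<Sum>m\<in>UNIV. ?c m l j * Ktil x \<epsilon> u k i m) = (\<Sum>m\<in>UNIV. ?c m l j * ?K k i m)
     - cN * (?T k * (\<Sum>m\<in>UNIV. ?c m l j * ?h i m) + ?L i * ?c k l j + kdelta k i * (\<Sum>m\<in>UNIV. ?c m l j * ?L m))"
  proof -
    have "(\<Sum>m\<in>UNIV. ?c m l j * Ktil x \<epsilon> u k i m) = (\<Sum>m\<in>UNIV. ?c m l j * ?K k i m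
       - cN * (?T k * (?c m l j * ?h i m) + ?L i * (?c m l j * kdelta k m) + kdelta k i * (?c m l j * ?L m)))"
      by (rule sum.cong[OF refl]) (simp add: Ktil_eq algebra_simps)
    also have "\<dots> = (\<Sum>m\<in>UNIV. ?c m l j * ?K k i m)
     - cN * (?T k * (\<Sum>m\<in>UNIV. ?c m l j * ?h i m) + ?L i * (\<Sum>m\<in>UNIV. ?c m l j * kdelta k m) + kdelta k i * (\<Sum>m\<in>UNIV. ?c m l j * ?L m))"
      by (simp only: sum_subtractf sum.distrib sum_distrib_left[symmetric])
    finally show ?thesis by (simp only: kdelta_sum4)
  qed
  have mc: "dh l i j u = (\<Sum>m\<in>UNIV. ?c m l i * ?h m j) + (\<Sum>m\<in>UNIV. ?c m l j * ?h i m)"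
    by (rule metric_compat[OF u])
  show ?thesis
    unfolding cov12_def[of _ _ "Ktil x \<epsilon>"] pdKt S1 S2 S3 mc
    unfolding cov12_def covT_def DT_def
    by (simp add: algebra_simps)
qed

end


lemma contr2a: "(\<Sum>j\<in>UNIV. \<Sum>l\<in>UNIV. g j l * kdelta i j) = (\<Sum>l\<in>UNIV. g (i::'n::finite) l :: real)"
proof -
  have "(\<Sum>j\<in>UNIV. \<Sum>l\<in>UNIV. g j l * kdelta i j) = (\<Sum>l\<in>UNIV. \<Sum>j\<in>UNIV. g j l * kdelta i j)" by (rule sum.swap)
  then show ?thesis by simp
qed

lemma contr2b: "(\<Sum>j\<in>UNIV. \<Sum>l\<in>UNIV. g j l * kdelta j k) = (\<Sum>l\<in>UNIV. g (k::'n::finite) l :: real)"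
  using contr2a[of g k] by (simp add: kdelta_sym)

lemma contr3: "(\<Sum>i\<in>UNIV. \<Sum>j\<in>UNIV. \<Sum>l\<in>UNIV. g i j l * kdelta i k) = (\<Sum>j\<in>UNIV. \<Sum>l\<in>UNIV. g (k::'n::finite) j l :: real)"
proof -
  have "(\<Sum>i\<in>UNIV. \<Sum>j\<in>UNIV. \<Sum>l\<in>UNIV. g i j l * kdelta i k) = (\<Sum>i\<in>UNIV. (\<Sum>j\<in>UNIV. \<Sum>l\<in>UNIV. g i j l) * kdelta i k)"
    by (simp add: sum_distrib_right)
  then show ?thesis by simp
qed

lemma BC_lemma:
  fixes B :: "'n::finite \<Rightarrow> 'n \<Rightarrow> 'n \<Rightarrow> 'n \<Rightarrow> real" and t :: "'n \<Rightarrow> 'n \<Rightarrow> real"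
  assumes s1: "\<And>k i j l. B k i j l = B i k j l" and s2: "\<And>k i j l. B k i j l = B k j i l"
    and tr: "\<And>i l. (\<Sum>j\<in>UNIV. B j i j l) = N * t i l"
  shows "(\<Sum>k\<in>UNIV. \<Sum>i\<in>UNIV. \<Sum>j\<in>UNIV. \<Sum>l\<in>UNIV. B k i j l * (c * (t k l * kdelta i j + t i l * kdelta j k + t j l * kdelta i k)))
    = 3 * c * N * (\<Sum>k\<in>UNIV. \<Sum>l\<in>UNIV. (t k l)^2)"
proof -
  have e1: "\<And>k l. (\<Sum>i\<in>UNIV. B k i i l) = (\<Sum>i\<in>UNIV. B i k i l)" by (rule sum.cong[OF refl], rule s1)
  have e2: "\<And>j l. (\<Sum>k\<in>UNIV. B k k j l) = (\<Sum>k\<in>UNIV. B k j k l)" by (rule sum.cong[OF refl], rule s2)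
  let ?S = "\<lambda>f. (\<Sum>k\<in>UNIV. \<Sum>i\<in>UNIV. \<Sum>j\<in>UNIV. \<Sum>l\<in>UNIV. f k i j l :: real)"
  have split: "?S (\<lambda>k i j l. B k i j l * (c * (t k l * kdelta i j + t i l * kdelta j k + t j l * kdelta i k)))
      = c * (?S (\<lambda>k i j l. (B k i j l * t k l) * kdelta i j) + ?S (\<lambda>k i j l. (B k i j l * t i l) * kdelta j k)
        + ?S (\<lambda>k i j l. (B k i j l * t j l) * kdelta i k))"
    by (simp add: algebra_simps sum.distrib sum_distrib_left)
  have t1: "?S (\<lambda>k i j l. (B k i j l * t k l) * kdelta i j) = N * (\<Sum>k\<in>UNIV. \<Sum>l\<in>UNIV. (t k l)^2)"
  proof -
    have "?S (\<lambda>k i j l. (B k i j l * t k l) * kdelta i j) = (\<Sum>k\<in>UNIV. \<Sum>i\<in>UNIV. \<Sum>l\<in>UNIV. B k i i l * t k l)"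
      by (simp only: contr2a)
    also have "\<dots> = (\<Sum>k\<in>UNIV. \<Sum>l\<in>UNIV. \<Sum>i\<in>UNIV. B k i i l * t k l)"
      by (rule sum.cong[OF refl], rule sum.swap)
    also have "\<dots> = (\<Sum>k\<in>UNIV. \<Sum>l\<in>UNIV. (\<Sum>i\<in>UNIV. B i k i l) * t k l)"
      by (simp add: sum_distrib_right[symmetric] e1)
    also have "\<dots> = N * (\<Sum>k\<in>UNIV. \<Sum>l\<in>UNIV. (t k l)^2)"
      by (simp add: tr sum_distrib_left power2_eq_square mult_ac)
    finally show ?thesis .
  qed
  have t2: "?S (\<lambda>k i j l. (B k i j l * t i l) * kdelta j k) = N * (\<Sum>k\<in>UNIV. \<Sum>l\<in>UNIV. (t k l)^2)"
  proof -
    have "?S (\<lambda>k i j l. (B k i j l * t i l) * kdelta j k) = (\<Sum>k\<in>UNIV. \<Sum>i\<in>UNIV. \<Sum>l\<in>UNIV. B k i k l * t i l)"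
      by (simp only: contr2b)
    also have "\<dots> = (\<Sum>i\<in>UNIV. \<Sum>k\<in>UNIV. \<Sum>l\<in>UNIV. B k i k l * t i l)"
      by (rule sum.swap)
    also have "\<dots> = (\<Sum>i\<in>UNIV. \<Sum>l\<in>UNIV. \<Sum>k\<in>UNIV. B k i k l * t i l)"
      by (rule sum.cong[OF refl], rule sum.swap)
    also have "\<dots> = (\<Sum>i\<in>UNIV. \<Sum>l\<in>UNIV. (\<Sum>k\<in>UNIV. B k i k l) * t i l)"
      by (simp add: sum_distrib_right)
    also have "\<dots> = N * (\<Sum>k\<in>UNIV. \<Sum>l\<in>UNIV. (t k l)^2)"
      by (simp add: tr sum_distrib_left power2_eq_square mult_ac)
    finally show ?thesis .
  qed
  have t3: "?S (\<lambda>k i j l. (B k i j l * t j l) * kdelta i k) = N * (\<Sum>k\<in>UNIV. \<Sum>l\<in>UNIV. (t k l)^2)"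
  proof -
    have "?S (\<lambda>k i j l. (B k i j l * t j l) * kdelta i k) = (\<Sum>k\<in>UNIV. \<Sum>j\<in>UNIV. \<Sum>l\<in>UNIV. B k k j l * t j l)"
      by (simp only: contr3)
    also have "\<dots> = (\<Sum>j\<in>UNIV. \<Sum>k\<in>UNIV. \<Sum>l\<in>UNIV. B k k j l * t j l)"
      by (rule sum.swap)
    also have "\<dots> = (\<Sum>j\<in>UNIV. \<Sum>l\<in>UNIV. \<Sum>k\<in>UNIV. B k k j l * t j l)"
      by (rule sum.cong[OF refl], rule sum.swap)
    also have "\<dots> = (\<Sum>j\<in>UNIV. \<Sum>l\<in>UNIV. (\<Sum>k\<in>UNIV. B k j k l) * t j l)"
      by (simp add: sum_distrib_right[symmetric] e2)
    also have "\<dots> = N * (\<Sum>k\<in>UNIV. \<Sum>l\<in>UNIV. (t k l)^2)"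
      by (simp add: tr sum_distrib_left power2_eq_square mult_ac)
    finally show ?thesis .
  qed
  show ?thesis using split t1 t2 t3 by simp
qed


lemma sum4_sq_zero:
  "(\<Sum>k\<in>UNIV. \<Sum>i\<in>UNIV. \<Sum>j\<in>UNIV. \<Sum>l\<in>UNIV. (f (k::'a::finite) (i::'b::finite) (j::'c::finite) (l::'d::finite) :: real)^2) = 0 \<longleftrightarrow> (\<forall>k i j l. f k i j l = 0)"
proof -
  have h1: "(\<Sum>l\<in>UNIV. (f k i j l)^2) = 0 \<longleftrightarrow> (\<forall>l. f k i j l = 0)" for k i j
    by (subst sum_nonneg_eq_0_iff) auto
  have h2: "(\<Sum>j\<in>UNIV. \<Sum>l\<in>UNIV. (f k i j l)^2) = 0 \<longleftrightarrow> (\<forall>j l. f k i j l = 0)" for k i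
    by (subst sum_nonneg_eq_0_iff) (auto intro: sum_nonneg simp: h1)
  have h3: "(\<Sum>i\<in>UNIV. \<Sum>j\<in>UNIV. \<Sum>l\<in>UNIV. (f k i j l)^2) = 0 \<longleftrightarrow> (\<forall>i j l. f k i j l = 0)" for k
    by (subst sum_nonneg_eq_0_iff) (auto intro!: sum_nonneg simp: h2)
  show ?thesis
    by (subst sum_nonneg_eq_0_iff) (auto intro!: sum_nonneg simp: h3)
qed

lemma sum_kdelta_diag: "(\<Sum>j\<in>UNIV. kdelta (j::'n::finite) j) = real CARD('n)"
  by (simp add: kdelta_def)

lemma main_alg:
  fixes A :: "'n::finite \<Rightarrow> 'n \<Rightarrow> 'n \<Rightarrow> 'n \<Rightarrow> real" and t :: "'n \<Rightarrow> 'n \<Rightarrow> real"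
  assumes s1: "\<And>k i j l. A k i j l = A i k j l" and s2: "\<And>k i j l. A k i j l = A k j i l"
    and tr: "\<And>i l. (\<Sum>j\<in>UNIV. A j i j l) = real CARD('n) * t i l"
  defines "c \<equiv> real CARD('n) / (real CARD('n) + 2)"
  defines "C \<equiv> \<lambda>k i j l. c * (t k l * kdelta i j + t i l * kdelta j k + t j l * kdelta i k)"
  shows "(\<Sum>k\<in>UNIV. \<Sum>i\<in>UNIV. \<Sum>j\<in>UNIV. \<Sum>l\<in>UNIV. (A k i j l)^2)
     = (\<Sum>k\<in>UNIV. \<Sum>i\<in>UNIV. \<Sum>j\<in>UNIV. \<Sum>l\<in>UNIV. (A k i j l - C k i j l)^2)
       + 3 * real CARD('n)^2 / (real CARD('n) + 2) * (\<Sum>i\<in>UNIV. \<Sum>j\<in>UNIV. (t j i)^2)"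
proof -
  let ?N = "real CARD('n)"
  let ?S = "\<lambda>f. (\<Sum>k\<in>UNIV. \<Sum>i\<in>UNIV. \<Sum>j\<in>UNIV. \<Sum>l\<in>UNIV. f k i j l :: real)"
  have N0: "?N > 0" by simp
  have cN: "c * (?N + 2) = ?N" unfolding c_def using N0 by (simp add: field_simps)
  have Cs1: "C k i j l = C i k j l" for k i j l unfolding C_def by (simp add: kdelta_sym algebra_simps)
  have Cs2: "C k i j l = C k j i l" for k i j l unfolding C_def by (simp add: kdelta_sym algebra_simps)
  have Ctr: "(\<Sum>j\<in>UNIV. C j i j l) = ?N * t i l" for i l
  proof -
    have "(\<Sum>j\<in>UNIV. C j i j l) = (\<Sum>j\<in>UNIV. (2 * c) * (t j l * kdelta i j) + (c * t i l) * kdelta j j)"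
      by (rule sum.cong[OF refl]) (simp add: C_def algebra_simps)
    also have "\<dots> = (2 * c) * (\<Sum>j\<in>UNIV. t j l * kdelta i j) + (c * t i l) * (\<Sum>j\<in>UNIV. kdelta (j::'n) j)"
      by (simp only: sum.distrib sum_distrib_left[symmetric])
    also have "\<dots> = c * (?N + 2) * t i l" by (simp only: kdelta_sum4 sum_kdelta_diag) (simp add: algebra_simps)
    finally show ?thesis using cN by simp
  qed
  have AC: "?S (\<lambda>k i j l. A k i j l * C k i j l) = 3 * c * ?N * (\<Sum>k\<in>UNIV. \<Sum>l\<in>UNIV. (t k l)^2)"
    unfolding C_def by (rule BC_lemma[OF s1 s2 tr])
  have CC: "?S (\<lambda>k i j l. C k i j l * C k i j l) = 3 * c * ?N * (\<Sum>k\<in>UNIV. \<Sum>l\<in>UNIV. (t k l)^2)"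
    using BC_lemma[where B=C and t=t and N="?N" and c=c, OF Cs1 Cs2 Ctr] unfolding C_def by simp
  have exp: "?S (\<lambda>k i j l. (A k i j l - C k i j l)^2) = ?S (\<lambda>k i j l. (A k i j l)^2)
      - 2 * ?S (\<lambda>k i j l. A k i j l * C k i j l) + ?S (\<lambda>k i j l. C k i j l * C k i j l)"
  proof -
    have pt: "\<And>k i j l. (A k i j l - C k i j l)^2 = (A k i j l)^2 - 2 * (A k i j l * C k i j l) + C k i j l * C k i j l"
      by (simp add: power2_eq_square algebra_simps)
    show ?thesis by (simp only: pt sum.distrib sum_subtractf sum_distrib_left[symmetric])
  qed
  have sw: "(\<Sum>i\<in>UNIV. \<Sum>j\<in>UNIV. (t j i)^2) = (\<Sum>k\<in>UNIV. \<Sum>l\<in>UNIV. (t k l)^2)"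
    by (rule sum.swap)
  have "3 * c * ?N = 3 * ?N^2 / (?N + 2)" unfolding c_def by (simp add: power2_eq_square)
  then show ?thesis using exp AC CC sw by simp
qed



lemma sum3_rev: "(\<Sum>a\<in>UNIV. \<Sum>b\<in>UNIV. \<Sum>c\<in>UNIV. f a b c) = (\<Sum>c\<in>UNIV. \<Sum>b\<in>UNIV. \<Sum>a\<in>UNIV. (f a b c :: real))"
proof -
  have "(\<Sum>a\<in>UNIV. \<Sum>b\<in>UNIV. \<Sum>c\<in>UNIV. f a b c) = (\<Sum>a\<in>UNIV. \<Sum>c\<in>UNIV. \<Sum>b\<in>UNIV. f a b c)"
    by (rule sum.cong[OF refl], rule sum.swap)
  also have "\<dots> = (\<Sum>c\<in>UNIV. \<Sum>a\<in>UNIV. \<Sum>b\<in>UNIV. f a b c)" by (rule sum.swap)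
  also have "\<dots> = (\<Sum>c\<in>UNIV. \<Sum>b\<in>UNIV. \<Sum>a\<in>UNIV. f a b c)" by (rule sum.cong[OF refl], rule sum.swap)
  finally show ?thesis .
qed

lemma sum3_rot: "(\<Sum>a\<in>UNIV. \<Sum>b\<in>UNIV. \<Sum>c\<in>UNIV. f a b c) = (\<Sum>c\<in>UNIV. \<Sum>a\<in>UNIV. \<Sum>b\<in>UNIV. (f a b c :: real))"
proof -
  have "(\<Sum>a\<in>UNIV. \<Sum>b\<in>UNIV. \<Sum>c\<in>UNIV. f a b c) = (\<Sum>a\<in>UNIV. \<Sum>c\<in>UNIV. \<Sum>b\<in>UNIV. f a b c)"
    by (rule sum.cong[OF refl], rule sum.swap)
  also have "\<dots> = (\<Sum>c\<in>UNIV. \<Sum>a\<in>UNIV. \<Sum>b\<in>UNIV. f a b c)" by (rule sum.swap)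
  finally show ?thesis .
qed

lemma sum_in4: "(\<Sum>j\<in>UNIV. \<Sum>g\<in>UNIV. \<Sum>a\<in>UNIV. \<Sum>b\<in>UNIV. \<Sum>n\<in>UNIV. f j g a b n)
   = (\<Sum>g\<in>UNIV. \<Sum>a\<in>UNIV. \<Sum>b\<in>UNIV. \<Sum>n\<in>UNIV. \<Sum>j\<in>UNIV. (f j g a b n :: real))"
proof -
  have "(\<Sum>j\<in>UNIV. \<Sum>g\<in>UNIV. \<Sum>a\<in>UNIV. \<Sum>b\<in>UNIV. \<Sum>n\<in>UNIV. f j g a b n)
     = (\<Sum>g\<in>UNIV. \<Sum>j\<in>UNIV. \<Sum>a\<in>UNIV. \<Sum>b\<in>UNIV. \<Sum>n\<in>UNIV. f j g a b n)" by (rule sum.swap)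
  also have "\<dots> = (\<Sum>g\<in>UNIV. \<Sum>a\<in>UNIV. \<Sum>j\<in>UNIV. \<Sum>b\<in>UNIV. \<Sum>n\<in>UNIV. f j g a b n)"
    by (rule sum.cong[OF refl], rule sum.swap)
  also have "\<dots> = (\<Sum>g\<in>UNIV. \<Sum>a\<in>UNIV. \<Sum>b\<in>UNIV. \<Sum>j\<in>UNIV. \<Sum>n\<in>UNIV. f j g a b n)"
    by (rule sum.cong[OF refl], rule sum.cong[OF refl], rule sum.swap)
  also have "\<dots> = (\<Sum>g\<in>UNIV. \<Sum>a\<in>UNIV. \<Sum>b\<in>UNIV. \<Sum>n\<in>UNIV. \<Sum>j\<in>UNIV. f j g a b n)"
    by (rule sum.cong[OF refl], rule sum.cong[OF refl], rule sum.cong[OF refl], rule sum.swap)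
  finally show ?thesis .
qed

definition T4 :: "('n::finite \<Rightarrow> real^'n) \<Rightarrow> ('n \<Rightarrow> 'n \<Rightarrow> 'n \<Rightarrow> 'n \<Rightarrow> real) \<Rightarrow> 'n \<Rightarrow> 'n \<Rightarrow> 'n \<Rightarrow> 'n \<Rightarrow> real" where
  "T4 E Z k i j l = (\<Sum>g\<in>UNIV. \<Sum>a\<in>UNIV. \<Sum>b\<in>UNIV. \<Sum>n\<in>UNIV. E l $ g * E i $ a * E j $ b * E k $ n * Z g n a b)"

definition T2 :: "('n::finite \<Rightarrow> real^'n) \<Rightarrow> ('n \<Rightarrow> 'n \<Rightarrow> real) \<Rightarrow> 'n \<Rightarrow> 'n \<Rightarrow> real" where
  "T2 E Y k l = (\<Sum>g\<in>UNIV. \<Sum>n\<in>UNIV. E l $ g * E k $ n * Y g n)"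

lemma T4_sym_ij:
  assumes "\<And>g n a b. Z g n a b = Z g n b a"
  shows "T4 E Z k i j l = T4 E Z k j i l"
proof -
  have "(\<Sum>a\<in>UNIV. \<Sum>b\<in>UNIV. \<Sum>n\<in>UNIV. E l $ g * E i $ a * E j $ b * E k $ n * Z g n a b)
      = (\<Sum>b\<in>UNIV. \<Sum>a\<in>UNIV. \<Sum>n\<in>UNIV. E l $ g * E i $ a * E j $ b * E k $ n * Z g n a b)" for g
    by (rule sum.swap)
  also have "\<dots> g = (\<Sum>a\<in>UNIV. \<Sum>b\<in>UNIV. \<Sum>n\<in>UNIV. E l $ g * E j $ a * E i $ b * E k $ n * Z g n a b)" for g
    using assms by (simp add: mult_ac)
  finally show ?thesis unfolding T4_def by simp
qed

lemma T4_sym_ki: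
  assumes "\<And>g n a b. Z g n a b = Z g a n b"
  shows "T4 E Z k i j l = T4 E Z i k j l"
proof -
  have "(\<Sum>a\<in>UNIV. \<Sum>b\<in>UNIV. \<Sum>n\<in>UNIV. E l $ g * E i $ a * E j $ b * E k $ n * Z g n a b)
      = (\<Sum>n\<in>UNIV. \<Sum>b\<in>UNIV. \<Sum>a\<in>UNIV. E l $ g * E i $ a * E j $ b * E k $ n * Z g n a b)" for g
    by (rule sum3_rev)
  also have "\<dots> g = (\<Sum>a\<in>UNIV. \<Sum>b\<in>UNIV. \<Sum>n\<in>UNIV. E l $ g * E k $ a * E j $ b * E i $ n * Z g n a b)" for g
    using assms by (simp add: mult_ac)
  finally show ?thesis unfolding T4_def by simp
qed


locale cahp = cah x U \<epsilon> for x :: "real^'n \<Rightarrow> real^'m" and U \<epsilon> +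
  fixes p :: "real^'n" and E :: "'n \<Rightarrow> real^'n"
  assumes pU: "p \<in> U" and orth: "h_orthonormal_frame x \<epsilon> p E"
begin

definition Mf :: "real^'n^'n" where "Mf = (\<chi> a i. E a $ i)"

lemma orth': "(\<Sum>i\<in>UNIV. \<Sum>j\<in>UNIV. E a $ i * E b $ j * hmet x \<epsilon> p i j) = kdelta a b"
  using orth unfolding h_orthonormal_frame_def hform_def by (simp add: mult_ac)

lemma Mf_prod: "Mf ** (hmat p ** transpose Mf) = mat 1"
proof -
  have "(Mf ** (hmat p ** transpose Mf)) $ a $ b = kdelta a b" for a b
  proof -
    have "(Mf ** (hmat p ** transpose Mf)) $ a $ b = (\<Sum>i\<in>UNIV. E a $ i * (\<Sum>j\<in>UNIV. hmet x \<epsilon> p i j * E b $ j))"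
      by (simp add: matrix_matrix_mult_def Mf_def transpose_def)
    also have "\<dots> = (\<Sum>i\<in>UNIV. \<Sum>j\<in>UNIV. E a $ i * E b $ j * hmet x \<epsilon> p i j)"
      by (simp add: sum_distrib_left mult_ac)
    finally show ?thesis using orth' by simp
  qed
  then show ?thesis by (simp add: vec_eq_iff mat_def kdelta_def)
qed

lemma Mf_inv: "invertible Mf"
  using Mf_prod invertible_right_inverse by blast

lemma frame_hinv: "(\<Sum>a\<in>UNIV. E a $ b * E a $ n) = hinv x \<epsilon> p b n"
proof -
  have inv: "invertible (hmat p)" using hmat_det[OF pU] invertible_det_nz by blast
  have 1: "(hmat p ** transpose Mf) ** Mf = mat 1"
    using Mf_prod matrix_left_right_inverse by blast
  have "transpose Mf ** Mf = (matrix_inv (hmat p) ** hmat p) ** (transpose Mf ** Mf)"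
    using matrix_inv_props(2)[OF inv] by simp
  also have "\<dots> = matrix_inv (hmat p) ** ((hmat p ** transpose Mf) ** Mf)"
    by (simp add: matrix_mul_assoc)
  also have "\<dots> = matrix_inv (hmat p)" using 1 by simp
  finally have "(transpose Mf ** Mf) $ b $ n = matrix_inv (hmat p) $ b $ n" by simp
  then show ?thesis
    by (simp add: matrix_matrix_mult_def Mf_def transpose_def hinv_def hmat_def)
qed

lemma frame_inj:
  assumes "\<And>l. (\<Sum>g\<in>UNIV. E l $ g * f g) = 0"
  shows "f g = 0"
proof -
  have "Mf *v (\<chi> g. f g) = 0"
    using assms by (simp add: vec_eq_iff matrix_vector_mult_def Mf_def)
  then have "(\<chi> g. f g) = 0"
    using inj_matrix_vector_mult[OF Mf_inv] by (metis matrix_vector_mult_0_right injD)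
  then show ?thesis by (simp add: vec_eq_iff)
qed

lemma Kder_T4: "Kder x \<epsilon> p E k i j l = T4 E (LK p) k i j l"
proof -
  have "(\<Sum>m\<in>UNIV. \<Sum>n\<in>UNIV. E l $ g * E i $ a * E j $ b * cov12 x \<epsilon> (Kc x \<epsilon>) p g m a b * hmet x \<epsilon> p m n * E k $ n)
     = (\<Sum>n\<in>UNIV. E l $ g * E i $ a * E j $ b * E k $ n * LK p g n a b)" for g a b
  proof -
    have "(\<Sum>m\<in>UNIV. \<Sum>n\<in>UNIV. E l $ g * E i $ a * E j $ b * cov12 x \<epsilon> (Kc x \<epsilon>) p g m a b * hmet x \<epsilon> p m n * E k $ n)
      = (\<Sum>n\<in>UNIV. \<Sum>m\<in>UNIV. E l $ g * E i $ a * E j $ b * cov12 x \<epsilon> (Kc x \<epsilon>) p g m a b * hmet x \<epsilon> p m n * E k $ n)"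
      by (rule sum.swap)
    then show ?thesis by (simp add: LK_def sum_distrib_left mult_ac)
  qed
  then show ?thesis unfolding Kder_def T4_def by simp
qed

lemma DT_low': "DT p g n = (\<Sum>m\<in>UNIV. covT x \<epsilon> p g m * hmet x \<epsilon> p m n)"
  unfolding DT_low[OF pU] by (rule sum.cong[OF refl]) (simp add: hmet_sym[OF pU, of n] mult.commute)

lemma Tder_T2: "Tder x \<epsilon> p E k l = T2 E (DT p) k l"
proof -
  have "(\<Sum>m\<in>UNIV. \<Sum>n\<in>UNIV. E l $ g * covT x \<epsilon> p g m * hmet x \<epsilon> p m n * E k $ n)
     = (\<Sum>n\<in>UNIV. E l $ g * E k $ n * DT p g n)" for g
  proof -
    have "(\<Sum>m\<in>UNIV. \<Sum>n\<in>UNIV. E l $ g * covT x \<epsilon> p g m * hmet x \<epsilon> p m n * E k $ n)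
      = (\<Sum>n\<in>UNIV. \<Sum>m\<in>UNIV. E l $ g * covT x \<epsilon> p g m * hmet x \<epsilon> p m n * E k $ n)"
      by (rule sum.swap)
    then show ?thesis by (simp add: DT_low' sum_distrib_left mult_ac)
  qed
  then show ?thesis unfolding Tder_def T2_def by simp
qed

end



lemma fac1: "(\<Sum>g\<in>UNIV. \<Sum>a\<in>UNIV. \<Sum>b\<in>UNIV. \<Sum>n\<in>UNIV. P g n * Q a b)
   = (\<Sum>g\<in>UNIV. \<Sum>n\<in>UNIV. P g n) * (\<Sum>a\<in>UNIV. \<Sum>b\<in>UNIV. (Q a b :: real))"
proof -
  have "(\<Sum>a\<in>UNIV. \<Sum>b\<in>UNIV. \<Sum>n\<in>UNIV. P g n * Q a b) = (\<Sum>n\<in>UNIV. \<Sum>a\<in>UNIV. \<Sum>b\<in>UNIV. P g n * Q a b)" for g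
    by (rule sum3_rot)
  then show ?thesis by (simp only: sum_distrib_right) (simp only: sum_distrib_left)
qed

lemma fac2: "(\<Sum>g\<in>UNIV. \<Sum>a\<in>UNIV. \<Sum>b\<in>UNIV. \<Sum>n\<in>UNIV. P g a * Q b n)
   = (\<Sum>g\<in>UNIV. \<Sum>a\<in>UNIV. P g a) * (\<Sum>b\<in>UNIV. \<Sum>n\<in>UNIV. (Q b n :: real))"
  by (simp only: sum_distrib_right) (simp only: sum_distrib_left)

lemma fac3: "(\<Sum>g\<in>UNIV. \<Sum>a\<in>UNIV. \<Sum>b\<in>UNIV. \<Sum>n\<in>UNIV. P g b * Q a n)
   = (\<Sum>g\<in>UNIV. \<Sum>b\<in>UNIV. P g b) * (\<Sum>a\<in>UNIV. \<Sum>n\<in>UNIV. (Q a n :: real))"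
proof -
  have "(\<Sum>a\<in>UNIV. \<Sum>b\<in>UNIV. \<Sum>n\<in>UNIV. P g b * Q a n) = (\<Sum>b\<in>UNIV. \<Sum>a\<in>UNIV. \<Sum>n\<in>UNIV. P g b * Q a n)" for g
    by (rule sum.swap)
  then show ?thesis by (simp only: sum_distrib_right) (simp only: sum_distrib_left)
qed

lemma T4_lin:
  "T4 E (\<lambda>g n a b. Z1 g n a b - c * (Z2 g n a b + Z3 g n a b + Z4 g n a b)) k i j l
   = T4 E Z1 k i j l - c * (T4 E Z2 k i j l + T4 E Z3 k i j l + T4 E Z4 k i j l)"
  unfolding T4_def by (simp add: algebra_simps sum.distrib sum_subtractf sum_distrib_left)

lemma T4_nested: "T4 E Z k i j l = (\<Sum>g\<in>UNIV. E l $ g * (\<Sum>a\<in>UNIV. E i $ a * (\<Sum>b\<in>UNIV. E j $ b * (\<Sum>n\<in>UNIV. E k $ n * Z g n a b))))"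
  unfolding T4_def by (simp add: sum_distrib_left mult.assoc)

context cahp begin

lemma T4_zero:
  assumes "\<And>k i j l. T4 E Z k i j l = 0"
  shows "Z g n a b = 0"
proof -
  have z1: "(\<Sum>g\<in>UNIV. E l $ g * (\<Sum>a\<in>UNIV. E i $ a * (\<Sum>b\<in>UNIV. E j $ b * (\<Sum>n\<in>UNIV. E k $ n * Z g n a b)))) = 0" for k i j l
    using assms[of k i j l] unfolding T4_nested .
  have z2: "(\<Sum>a\<in>UNIV. E i $ a * (\<Sum>b\<in>UNIV. E j $ b * (\<Sum>n\<in>UNIV. E k $ n * Z g n a b))) = 0" for k i j g
    by (rule frame_inj[where f="\<lambda>g. (\<Sum>a\<in>UNIV. E i $ a * (\<Sum>b\<in>UNIV. E j $ b * (\<Sum>n\<in>UNIV. E k $ n * Z g n a b)))"]) (rule z1)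
  have z3: "(\<Sum>b\<in>UNIV. E j $ b * (\<Sum>n\<in>UNIV. E k $ n * Z g n a b)) = 0" for k j g a
    by (rule frame_inj[where f="\<lambda>a. (\<Sum>b\<in>UNIV. E j $ b * (\<Sum>n\<in>UNIV. E k $ n * Z g n a b))"]) (rule z2)
  have z4: "(\<Sum>n\<in>UNIV. E k $ n * Z g n a b) = 0" for k g a b
    by (rule frame_inj[where f="\<lambda>b. (\<Sum>n\<in>UNIV. E k $ n * Z g n a b)"]) (rule z3)
  show "Z g n a b = 0"
    by (rule frame_inj[where f="\<lambda>n. Z g n a b"]) (rule z4)
qed

lemma hinv_inv': "(\<Sum>n\<in>UNIV. hinv x \<epsilon> p b n * hmet x \<epsilon> p m n) = kdelta b m"
proof -
  have "(\<Sum>n\<in>UNIV. hinv x \<epsilon> p b n * hmet x \<epsilon> p m n) = (\<Sum>n\<in>UNIV. hinv x \<epsilon> p b n * hmet x \<epsilon> p n m)"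
    by (rule sum.cong[OF refl]) (simp add: hmet_sym[OF pU, of m])
  then show ?thesis using hinv_inv(2)[OF pU] by simp
qed

lemma trace_T4: "(\<Sum>j\<in>UNIV. T4 E (LK p) j i j l) = real CARD('n) * T2 E (DT p) i l"
proof -
  have inner: "(\<Sum>b\<in>UNIV. \<Sum>n\<in>UNIV. hinv x \<epsilon> p b n * LK p g n a b) = real CARD('n) * DT p g a" for g a
  proof -
    have "(\<Sum>n\<in>UNIV. hinv x \<epsilon> p b n * LK p g n a b) = cov12 x \<epsilon> (Kc x \<epsilon>) p g b a b" for b
    proof -
      have "(\<Sum>n\<in>UNIV. hinv x \<epsilon> p b n * LK p g n a b)
          = (\<Sum>n\<in>UNIV. \<Sum>m\<in>UNIV. cov12 x \<epsilon> (Kc x \<epsilon>) p g m a b * (hinv x \<epsilon> p b n * hmet x \<epsilon> p m n))"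
        unfolding LK_def by (simp add: sum_distrib_left mult_ac)
      also have "\<dots> = (\<Sum>m\<in>UNIV. \<Sum>n\<in>UNIV. cov12 x \<epsilon> (Kc x \<epsilon>) p g m a b * (hinv x \<epsilon> p b n * hmet x \<epsilon> p m n))"
        by (rule sum.swap)
      also have "\<dots> = (\<Sum>m\<in>UNIV. cov12 x \<epsilon> (Kc x \<epsilon>) p g m a b * kdelta b m)"
        by (simp only: sum_distrib_left[symmetric] hinv_inv')
      finally show ?thesis by simp
    qed
    then show ?thesis using trace_cov[OF pU, of g a] by simp
  qed
  have "(\<Sum>j\<in>UNIV. T4 E (LK p) j i j l)
      = (\<Sum>g\<in>UNIV. \<Sum>a\<in>UNIV. \<Sum>b\<in>UNIV. \<Sum>n\<in>UNIV. \<Sum>j\<in>UNIV. E l $ g * E i $ a * E j $ b * E j $ n * LK p g n a b)"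
    unfolding T4_def by (rule sum_in4)
  also have "\<dots> = (\<Sum>g\<in>UNIV. \<Sum>a\<in>UNIV. \<Sum>b\<in>UNIV. \<Sum>n\<in>UNIV. E l $ g * E i $ a * ((\<Sum>j\<in>UNIV. E j $ b * E j $ n) * LK p g n a b))"
    by (simp add: sum_distrib_left sum_distrib_right mult_ac)
  also have "\<dots> = (\<Sum>g\<in>UNIV. \<Sum>a\<in>UNIV. E l $ g * E i $ a * (\<Sum>b\<in>UNIV. \<Sum>n\<in>UNIV. hinv x \<epsilon> p b n * LK p g n a b))"
    by (simp add: frame_hinv sum_distrib_left)
  also have "\<dots> = (\<Sum>g\<in>UNIV. \<Sum>a\<in>UNIV. E l $ g * E i $ a * (real CARD('n) * DT p g a))"
    by (simp add: inner)
  also have "\<dots> = real CARD('n) * T2 E (DT p) i l"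
    unfolding T2_def by (simp add: sum_distrib_left mult_ac)
  finally show ?thesis .
qed

definition ZK :: "'n \<Rightarrow> 'n \<Rightarrow> 'n \<Rightarrow> 'n \<Rightarrow> real" where
  "ZK g n a b = (\<Sum>m\<in>UNIV. cov12 x \<epsilon> (Ktil x \<epsilon>) p g m a b * hmet x \<epsilon> p m n)"

lemma ZK_expr: "ZK g n a b = LK p g n a b - cN * (hmet x \<epsilon> p a b * DT p g n + DT p g a * hmet x \<epsilon> p b n + DT p g b * hmet x \<epsilon> p a n)"
proof -
  have "ZK g n a b = (\<Sum>m\<in>UNIV. cov12 x \<epsilon> (Kc x \<epsilon>) p g m a b * hmet x \<epsilon> p m n
      - cN * (hmet x \<epsilon> p a b * (covT x \<epsilon> p g m * hmet x \<epsilon> p m n) + DT p g a * (hmet x \<epsilon> p m n * kdelta m b)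
        + DT p g b * (hmet x \<epsilon> p m n * kdelta m a)))"
    unfolding ZK_def by (rule sum.cong[OF refl]) (simp add: cov_Ktil[OF pU] algebra_simps)
  also have "\<dots> = LK p g n a b - cN * (hmet x \<epsilon> p a b * (\<Sum>m\<in>UNIV. covT x \<epsilon> p g m * hmet x \<epsilon> p m n)
      + DT p g a * (\<Sum>m\<in>UNIV. hmet x \<epsilon> p m n * kdelta m b) + DT p g b * (\<Sum>m\<in>UNIV. hmet x \<epsilon> p m n * kdelta m a))"
    unfolding LK_def by (simp only: sum_subtractf sum.distrib sum_distrib_left[symmetric])
  also have "\<dots> = LK p g n a b - cN * (hmet x \<epsilon> p a b * DT p g n + DT p g a * hmet x \<epsilon> p b n + DT p g b * hmet x \<epsilon> p a n)"
    by (simp only: kdelta_sum2 DT_low'[symmetric])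
  finally show ?thesis .
qed

lemma orth_ij: "(\<Sum>a\<in>UNIV. \<Sum>b\<in>UNIV. E i $ a * E j $ b * hmet x \<epsilon> p a b) = kdelta i j"
  by (rule orth')

lemma T4_ZK: "T4 E ZK k i j l = T4 E (LK p) k i j l
   - cN * (T2 E (DT p) k l * kdelta i j + T2 E (DT p) i l * kdelta j k + T2 E (DT p) j l * kdelta i k)"
proof -
  have e: "ZK = (\<lambda>g n a b. LK p g n a b - cN * (hmet x \<epsilon> p a b * DT p g n + DT p g a * hmet x \<epsilon> p b n + DT p g b * hmet x \<epsilon> p a n))"
    by (intro ext) (rule ZK_expr)
  have A: "T4 E (\<lambda>g n a b. hmet x \<epsilon> p a b * DT p g n) k i j l = T2 E (DT p) k l * kdelta i j"
  proof -
    have "T4 E (\<lambda>g n a b. hmet x \<epsilon> p a b * DT p g n) k i j l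
       = (\<Sum>g\<in>UNIV. \<Sum>a\<in>UNIV. \<Sum>b\<in>UNIV. \<Sum>n\<in>UNIV. (E l $ g * E k $ n * DT p g n) * (E i $ a * E j $ b * hmet x \<epsilon> p a b))"
      unfolding T4_def by (simp add: mult_ac)
    also have "\<dots> = T2 E (DT p) k l * kdelta i j" unfolding fac1 T2_def orth_ij ..
    finally show ?thesis .
  qed
  have B: "T4 E (\<lambda>g n a b. DT p g a * hmet x \<epsilon> p b n) k i j l = T2 E (DT p) i l * kdelta j k"
  proof -
    have "T4 E (\<lambda>g n a b. DT p g a * hmet x \<epsilon> p b n) k i j l
       = (\<Sum>g\<in>UNIV. \<Sum>a\<in>UNIV. \<Sum>b\<in>UNIV. \<Sum>n\<in>UNIV. (E l $ g * E i $ a * DT p g a) * (E j $ b * E k $ n * hmet x \<epsilon> p b n))"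
      unfolding T4_def by (simp add: mult_ac)
    also have "\<dots> = T2 E (DT p) i l * kdelta j k" unfolding fac2 T2_def orth_ij ..
    finally show ?thesis .
  qed
  have C: "T4 E (\<lambda>g n a b. DT p g b * hmet x \<epsilon> p a n) k i j l = T2 E (DT p) j l * kdelta i k"
  proof -
    have "T4 E (\<lambda>g n a b. DT p g b * hmet x \<epsilon> p a n) k i j l
       = (\<Sum>g\<in>UNIV. \<Sum>a\<in>UNIV. \<Sum>b\<in>UNIV. \<Sum>n\<in>UNIV. (E l $ g * E j $ b * DT p g b) * (E i $ a * E k $ n * hmet x \<epsilon> p a n))"
      unfolding T4_def by (simp add: mult_ac)
    also have "\<dots> = T2 E (DT p) j l * kdelta i k" unfolding fac3 T2_def orth_ij ..
    finally show ?thesis .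
  qed
  show ?thesis unfolding e T4_lin A B C ..
qed

lemma ZK_zero_iff: "(\<forall>g n a b. ZK g n a b = 0) \<longleftrightarrow> (\<forall>l k i j. cov12 x \<epsilon> (Ktil x \<epsilon>) p l k i j = 0)"
proof
  assume z: "\<forall>g n a b. ZK g n a b = 0"
  show "\<forall>l k i j. cov12 x \<epsilon> (Ktil x \<epsilon>) p l k i j = 0"
  proof (intro allI)
    fix l k i j
    have "hmat p *v (\<chi> m. cov12 x \<epsilon> (Ktil x \<epsilon>) p l m i j) = 0"
    proof -
      have "(hmat p *v (\<chi> m. cov12 x \<epsilon> (Ktil x \<epsilon>) p l m i j)) $ n = ZK l n i j" for n
        unfolding ZK_def by (simp add: matrix_vector_mult_def hmet_sym[OF pU, of n] mult.commute)
      then show ?thesis using z by (simp add: vec_eq_iff)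
    qed
    moreover have "invertible (hmat p)" using hmat_det[OF pU] invertible_det_nz by blast
    ultimately have "(\<chi> m. cov12 x \<epsilon> (Ktil x \<epsilon>) p l m i j) = 0"
      using inj_matrix_vector_mult by (metis matrix_vector_mult_0_right injD)
    then show "cov12 x \<epsilon> (Ktil x \<epsilon>) p l k i j = 0" by (simp add: vec_eq_iff)
  qed
next
  assume "\<forall>l k i j. cov12 x \<epsilon> (Ktil x \<epsilon>) p l k i j = 0"
  then show "\<forall>g n a b. ZK g n a b = 0" unfolding ZK_def by simp
qed

end


context cahp begin

lemma final:
  shows "normsq_DK x \<epsilon> p E \<ge> 3 * real CARD('n)^2 / (real CARD('n) + 2) * normsq_DT x \<epsilon> p E
    \<and> (normsq_DK x \<epsilon> p E = 3 * real CARD('n)^2 / (real CARD('n) + 2) * normsq_DT x \<epsilon> p E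
         \<longleftrightarrow> (\<forall>l k i j. cov12 x \<epsilon> (Ktil x \<epsilon>) p l k i j = 0))
    \<and> (normsq_DK x \<epsilon> p E = 3 * real CARD('n)^2 / (real CARD('n) + 2) * normsq_DT x \<epsilon> p E
         \<longleftrightarrow> (\<forall>i j k l. Kder x \<epsilon> p E k i j l = real CARD('n) / (real CARD('n) + 2) *
               (Tder x \<epsilon> p E k l * kdelta i j + Tder x \<epsilon> p E i l * kdelta j k
                + Tder x \<epsilon> p E j l * kdelta i k)))"
proof -
  let ?N = "real CARD('n)"
  define A where "A k i j l = Kder x \<epsilon> p E k i j l" for k i j l
  define t where "t a b = Tder x \<epsilon> p E a b" for a b
  define C where "C k i j l = ?N / (?N + 2) * (t k l * kdelta i j + t i l * kdelta j k + t j l * kdelta i k)" for k i j l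
  have s1: "A k i j l = A i k j l" for k i j l
    unfolding A_def Kder_T4 by (rule T4_sym_ki) (rule LK_sym2[OF pU])
  have s2: "A k i j l = A k j i l" for k i j l
    unfolding A_def Kder_T4 by (rule T4_sym_ij) (rule LK_sym1[OF pU])
  have tr: "(\<Sum>j\<in>UNIV. A j i j l) = ?N * t i l" for i l
    unfolding A_def t_def Kder_T4 Tder_T2 by (rule trace_T4)
  have id: "(\<Sum>k\<in>UNIV. \<Sum>i\<in>UNIV. \<Sum>j\<in>UNIV. \<Sum>l\<in>UNIV. (A k i j l)^2)
     = (\<Sum>k\<in>UNIV. \<Sum>i\<in>UNIV. \<Sum>j\<in>UNIV. \<Sum>l\<in>UNIV. (A k i j l - C k i j l)^2)
       + 3 * ?N^2 / (?N + 2) * (\<Sum>i\<in>UNIV. \<Sum>j\<in>UNIV. (t j i)^2)"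
    using main_alg[OF s1 s2 tr] unfolding C_def by simp
  have DK: "normsq_DK x \<epsilon> p E = (\<Sum>k\<in>UNIV. \<Sum>i\<in>UNIV. \<Sum>j\<in>UNIV. \<Sum>l\<in>UNIV. (A k i j l)^2)"
    unfolding normsq_DK_def A_def by (rule sum3_rot)
  have DT: "normsq_DT x \<epsilon> p E = (\<Sum>i\<in>UNIV. \<Sum>j\<in>UNIV. (t j i)^2)"
    unfolding normsq_DT_def t_def ..
  let ?R = "(\<Sum>k\<in>UNIV. \<Sum>i\<in>UNIV. \<Sum>j\<in>UNIV. \<Sum>l\<in>UNIV. (A k i j l - C k i j l)^2)"
  have Rnn: "?R \<ge> 0" by (intro sum_nonneg) auto
  have Rz: "?R = 0 \<longleftrightarrow> (\<forall>k i j l. A k i j l = C k i j l)"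
    using sum4_sq_zero[of "\<lambda>k i j l. A k i j l - C k i j l"] by simp
  have eq_iff: "normsq_DK x \<epsilon> p E = 3 * ?N^2 / (?N + 2) * normsq_DT x \<epsilon> p E \<longleftrightarrow> (\<forall>k i j l. A k i j l = C k i j l)"
    using DK DT id Rz by auto
  have c2: "(\<forall>l k i j. cov12 x \<epsilon> (Ktil x \<epsilon>) p l k i j = 0) \<longleftrightarrow> (\<forall>k i j l. A k i j l = C k i j l)"
  proof -
    have T: "T4 E ZK k i j l = A k i j l - C k i j l" for k i j l
      unfolding T4_ZK A_def C_def t_def Kder_T4 Tder_T2 cN_def ..
    have "(\<forall>g n a b. ZK g n a b = 0) \<longleftrightarrow> (\<forall>k i j l. T4 E ZK k i j l = 0)"
    proof
      assume "\<forall>g n a b. ZK g n a b = 0"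
      then show "\<forall>k i j l. T4 E ZK k i j l = 0" unfolding T4_def by simp
    next
      assume "\<forall>k i j l. T4 E ZK k i j l = 0"
      then show "\<forall>g n a b. ZK g n a b = 0" using T4_zero by blast
    qed
    then show ?thesis using ZK_zero_iff T by auto
  qed
  have c3: "(\<forall>i j k l. Kder x \<epsilon> p E k i j l = ?N / (?N + 2) *
               (Tder x \<epsilon> p E k l * kdelta i j + Tder x \<epsilon> p E i l * kdelta j k
                + Tder x \<epsilon> p E j l * kdelta i k)) \<longleftrightarrow> (\<forall>k i j l. A k i j l = C k i j l)"
    unfolding A_def C_def t_def by blast
  have ineq: "normsq_DK x \<epsilon> p E \<ge> 3 * ?N^2 / (?N + 2) * normsq_DT x \<epsilon> p E"
  proof -
    define kk where "kk = 3 * ?N^2 / (?N + 2) * normsq_DT x \<epsilon> p E"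
    have "normsq_DK x \<epsilon> p E = ?R + kk" unfolding kk_def using DK DT id by simp
    then show ?thesis using Rnn unfolding kk_def[symmetric] by linarith
  qed
  show ?thesis using ineq eq_iff c2 c3 by blast
qed

end


theorem proposition3p1:
  fixes x :: "real^'n \<Rightarrow> real^'m" and U :: "(real^'n) set" and \<epsilon> :: real
    and p :: "real^'n" and E :: "'n \<Rightarrow> real^'n"
  assumes "CARD('m) = CARD('n) + 1"
    and "smooth_on_open x U"
    and "\<forall>u\<in>U. centroaffine_at x u"
    and "\<epsilon> = 1 \<or> \<epsilon> = -1"
    and "\<forall>u\<in>U. hpos x \<epsilon> u"
    and "p \<in> U"
    and "h_orthonormal_frame x \<epsilon> p E"
  shows "normsq_DK x \<epsilon> p E \<ge> 3 * real CARD('n)^2 / (real CARD('n) + 2) * normsq_DT x \<epsilon> p E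
    \<and> (normsq_DK x \<epsilon> p E = 3 * real CARD('n)^2 / (real CARD('n) + 2) * normsq_DT x \<epsilon> p E
         \<longleftrightarrow> (\<forall>l k i j. cov12 x \<epsilon> (Ktil x \<epsilon>) p l k i j = 0))
    \<and> (normsq_DK x \<epsilon> p E = 3 * real CARD('n)^2 / (real CARD('n) + 2) * normsq_DT x \<epsilon> p E
         \<longleftrightarrow> (\<forall>i j k l. Kder x \<epsilon> p E k i j l = real CARD('n) / (real CARD('n) + 2) *
               (Tder x \<epsilon> p E k l * kdelta i j + Tder x \<epsilon> p E i l * kdelta j k
                + Tder x \<epsilon> p E j l * kdelta i k)))"
proof -
  interpret cahp x U \<epsilon> p E
  proof
    show "CARD('m) = CARD('n) + 1" by (rule assms(1))
    show "open U" using assms(2) sm_iff_smooth by blast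
    show "sm U x" using assms(2) sm_iff_smooth by blast
    show "\<And>u. u \<in> U \<Longrightarrow> centroaffine_at x u" using assms(3) by blast
    show "\<epsilon> = 1 \<or> \<epsilon> = -1" by (rule assms(4))
    show "\<And>u. u \<in> U \<Longrightarrow> hpos x \<epsilon> u" using assms(5) by blast
    show "p \<in> U" by (rule assms(6))
    show "h_orthonormal_frame x \<epsilon> p E" by (rule assms(7))
  qed
  show ?thesis by (rule final)
qed

end
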